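(* Let $K_M(d,p)=\sup|Q_d|_p/\prod_{m=1}^d\mu_m(dp)$, the supremum over all $n\ge1$, all $b\in B(d,n)$ and all families of martingale differences $\{\xi(i,m)\}$ with $0<\mu_m(dp)<\infty$ for all $m$. There is an absolute constant $C\in(0,\infty)$ such that for all $d\ge2$ and $p\ge2$ $$C^d\,p^{d/2}\le K_M(d,p)\le\gamma(d)\,p^d,$$ where $\gamma(1)=\sqrt2$, $\gamma(d+1)=\sqrt2(1+1/d)^d\gamma(d)$.
   Context: Martingale setting: filtration $\mathcal F(0)\subset\mathcal F(1)\subset\cdots$ with $\mathcal F(0)$ trivial; for $m=1,\dots,d$, $\xi(i,m)$ is $\mathcal F(i)$-measurable, integrable, $\mathbf E[\xi(i,m)\mid\mathcal F(i-1)]=0$. $I(d,n)=\{(i_1,\dots,i_d):1\le i_1<\dots<i_d\le n\}$, $\xi(I)=\prod_m\xi(i_m,m)$, $Q_d=\sum_{I\in I(d,n)}b(I)\xi(I)$, $B(d,n)=\{b:\sum_Ib(I)^2=1\}$. $|\eta|_p=(\mathbf E|\eta|^p)^{1/p}$, $\mu_m(p)=\sup_i|\xi(i,m)|_p$. *)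

theory Defs
  imports "HOL-Probability.Probability"
begin

definition lp_norm :: "'a measure \<Rightarrow> real \<Rightarrow> ('a \<Rightarrow> real) \<Rightarrow> real" where
  "lp_norm M p f = (\<integral>x. \<bar>f x\<bar> powr p \<partial>M) powr (1 / p)"

definition mu :: "'a measure \<Rightarrow> (nat \<Rightarrow> nat \<Rightarrow> 'a \<Rightarrow> real) \<Rightarrow> nat \<Rightarrow> nat \<Rightarrow> real \<Rightarrow> real" where
  "mu M \<xi> n m p = (SUP i\<in>{1..n}. lp_norm M p (\<xi> i m))"

definition idx_set :: "nat \<Rightarrow> nat \<Rightarrow> nat list set" where
  "idx_set d n = {I. length I = d \<and> sorted_wrt (<) I \<and> set I \<subseteq> {1..n}}"

definition xi_prod :: "(nat \<Rightarrow> nat \<Rightarrow> 'a \<Rightarrow> real) \<Rightarrow> nat \<Rightarrow> nat list \<Rightarrow> 'a \<Rightarrow> real" where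
  "xi_prod \<xi> d I x = (\<Prod>m\<in>{1..d}. \<xi> (I ! (m - 1)) m x)"

definition Qd :: "(nat \<Rightarrow> nat \<Rightarrow> 'a \<Rightarrow> real) \<Rightarrow> nat \<Rightarrow> nat \<Rightarrow> (nat list \<Rightarrow> real) \<Rightarrow> 'a \<Rightarrow> real" where
  "Qd \<xi> d n b x = (\<Sum>I\<in>idx_set d n. b I * xi_prod \<xi> d I x)"

definition coef_set :: "nat \<Rightarrow> nat \<Rightarrow> (nat list \<Rightarrow> real) set" where
  "coef_set d n = {b. (\<Sum>I\<in>idx_set d n. (b I)\<^sup>2) = 1}"

definition mart_diff :: "'a measure \<Rightarrow> (nat \<Rightarrow> 'a measure) \<Rightarrow> (nat \<Rightarrow> nat \<Rightarrow> 'a \<Rightarrow> real)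
    \<Rightarrow> nat \<Rightarrow> nat \<Rightarrow> bool" where
  "mart_diff M F \<xi> d n \<longleftrightarrow>
     prob_space M \<and>
     (\<forall>i. subalgebra M (F i)) \<and>
     (\<forall>i j. i \<le> j \<longrightarrow> sets (F i) \<subseteq> sets (F j)) \<and>
     sets (F 0) = {{}, space M} \<and>
     (\<forall>i\<in>{1..n}. \<forall>m\<in>{1..d}.
        \<xi> i m \<in> borel_measurable (F i) \<and> integrable M (\<xi> i m) \<and>
        (AE x in M. real_cond_exp M (F (i - 1)) (\<xi> i m) x = 0))"

text \<open>Admissible data for K_M(d,p): mu_m(dp) finite (|xi(i,m)|^(dp) integrable) and positive.\<close>
definition admissible :: "'a measure \<Rightarrow> (nat \<Rightarrow> 'a measure) \<Rightarrow> (nat \<Rightarrow> nat \<Rightarrow> 'a \<Rightarrow> real)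
    \<Rightarrow> nat \<Rightarrow> nat \<Rightarrow> (nat list \<Rightarrow> real) \<Rightarrow> real \<Rightarrow> bool" where
  "admissible M F \<xi> d n b p \<longleftrightarrow>
     n \<ge> 1 \<and> b \<in> coef_set d n \<and> mart_diff M F \<xi> d n \<and>
     (\<forall>i\<in>{1..n}. \<forall>m\<in>{1..d}. integrable M (\<lambda>x. \<bar>\<xi> i m x\<bar> powr (real d * p))) \<and>
     (\<forall>m\<in>{1..d}. mu M \<xi> n m (real d * p) > 0)"

text \<open>K_M(d,p) computed over probability spaces on a given carrier type 'a.\<close>
definition KM :: "'a itself \<Rightarrow> nat \<Rightarrow> real \<Rightarrow> ereal" where
  "KM _ d p = (SUP (M, F, \<xi>, n, b) \<in> {(M :: 'a measure, F, \<xi>, n, b). admissible M F \<xi> d n b p}.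
      ereal (lp_norm M p (Qd \<xi> d n b) / (\<Prod>m\<in>{1..d}. mu M \<xi> n m (real d * p))))"

fun gamma_c :: "nat \<Rightarrow> real" where
  "gamma_c 0 = 0"
| "gamma_c (Suc 0) = sqrt 2"
| "gamma_c (Suc (Suc d)) = sqrt 2 * (1 + 1 / real (Suc d)) ^ (Suc d) * gamma_c (Suc d)"

end

theory Submission
  imports Defs "HOL-Probability.Product_PMF"
begin

lemma powr_sub1_mult: fixes v r :: real assumes "0 \<le> v" "1 \<le> r"
  shows "v powr (r - 1) * v = v powr r"
proof (cases "v = 0")
  case True then show ?thesis using assms by simp
next
  case False then have "v powr (r - 1) * v powr 1 = v powr r"
    using assms powr_add[of v "r - 1" 1] by simp
  then show ?thesis using assms False by simp
qed

lemma tangent_powr: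
  fixes u v r :: real assumes u: "0 \<le> u" and v: "0 \<le> v" and r: "1 \<le> r"
  shows "v powr r + r * v powr (r - 1) * (u - v) \<le> u powr r"
proof -
  have vv: "v powr (r - 1) * v = v powr r" using powr_sub1_mult v r by blast
  show ?thesis
  proof (cases "r = 1")
    case True then show ?thesis using u v by (cases "v = 0") auto
  next
    case False
    then have r1: "r > 1" using r by simp
    show ?thesis
    proof (cases "v = 0 \<or> u = 0")
      case True
      then show ?thesis
      proof
        assume "v = 0" then show ?thesis using u r1 by simp
      next
        assume u0: "u = 0"
        have "v powr r + r * v powr (r - 1) * (u - v) = (1 - r) * v powr r"
          using u0 vv by (simp add: algebra_simps)
        also have "\<dots> \<le> 0" using r1 by (simp add: mult_nonpos_nonneg)
        finally show ?thesis using u0 by simp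
      qed
    next
      case False
      then have u0: "u > 0" and v0: "v > 0" using u v by auto
      have "u * v powr (r - 1) \<le> u powr r / r + (v powr (r - 1)) powr (r / (r - 1)) / (r / (r - 1))"
        using r1 u0 v0 by (intro Youngs_inequality) (auto simp: field_simps)
      also have "(v powr (r - 1)) powr (r / (r - 1)) = v powr r"
        using r1 by (simp add: powr_powr)
      finally have "u * v powr (r - 1) \<le> u powr r / r + v powr r * (r - 1) / r"
        by (simp add: field_simps)
      then have "r * (u * v powr (r - 1)) \<le> u powr r + v powr r * (r - 1)"
        using r1 by (simp add: field_simps)
      then show ?thesis using vv by (simp add: algebra_simps)
    qed
  qed
qed

lemma tangent_abs_powr:
  fixes y z q :: real assumes q: "1 \<le> q"
  shows "\<bar>z\<bar> powr q + q * sgn z * \<bar>z\<bar> powr (q - 1) * (y - z) \<le> \<bar>y\<bar> powr q"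
proof -
  have "sgn z * (y - z) \<le> \<bar>y\<bar> - \<bar>z\<bar>"
    by (cases "z > 0"; cases "z < 0") (auto simp: sgn_if)
  then have "q * \<bar>z\<bar> powr (q - 1) * (sgn z * (y - z)) \<le> q * \<bar>z\<bar> powr (q - 1) * (\<bar>y\<bar> - \<bar>z\<bar>)"
    using q by (intro mult_left_mono) auto
  moreover have "\<bar>z\<bar> powr q + q * \<bar>z\<bar> powr (q - 1) * (\<bar>y\<bar> - \<bar>z\<bar>) \<le> \<bar>y\<bar> powr q"
    using tangent_powr[of "\<bar>y\<bar>" "\<bar>z\<bar>" q] q by simp
  ultimately show ?thesis by (simp add: algebra_simps)
qed

lemma powr_le_max_mult:
  fixes u m r :: real assumes "0 \<le> u" "u \<le> m" "1 \<le> r"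
  shows "u powr r \<le> m powr (r - 1) * u"
proof -
  have "u powr r = u powr (r - 1) * u" using powr_sub1_mult assms by simp
  also have "\<dots> \<le> m powr (r - 1) * u"
    using assms by (intro mult_right_mono powr_mono2) auto
  finally show ?thesis .
qed

lemma lipschitz_sgn_powr:
  fixes a b r :: real assumes r: "1 \<le> r"
  shows "\<bar>sgn a * \<bar>a\<bar> powr r - sgn b * \<bar>b\<bar> powr r\<bar> \<le> r * max \<bar>a\<bar> \<bar>b\<bar> powr (r - 1) * \<bar>a - b\<bar>"
proof -
  define M where "M = max \<bar>a\<bar> \<bar>b\<bar>"
  have M0: "0 \<le> M" unfolding M_def by simp
  have MP: "0 \<le> M powr (r - 1)" by simp
  have same: "\<bar>u powr r - v powr r\<bar> \<le> r * M powr (r - 1) * \<bar>u - v\<bar>"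
    if "0 \<le> u" "0 \<le> v" "u \<le> M" "v \<le> M" for u v
  proof -
    have key: "y powr r - x powr r \<le> r * M powr (r - 1) * (y - x)"
      if "0 \<le> x" "x \<le> y" "y \<le> M" for x y
    proof -
      have "y powr r + r * y powr (r - 1) * (x - y) \<le> x powr r"
        using tangent_powr[of x y r] that r by simp
      then have "y powr r - x powr r \<le> r * y powr (r - 1) * (y - x)" by (simp add: algebra_simps)
      also have "\<dots> \<le> r * M powr (r - 1) * (y - x)"
        using that r by (intro mult_right_mono mult_left_mono powr_mono2) auto
      finally show ?thesis .
    qed
    show ?thesis
    proof (cases "u \<le> v")
      case True
      then have "v powr r - u powr r \<le> r * M powr (r - 1) * (v - u)" using key that by simp
      moreover have "u powr r \<le> v powr r" using True that r by (intro powr_mono2) auto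
      ultimately show ?thesis using True by (simp add: abs_if)
    next
      case False
      then have "u powr r - v powr r \<le> r * M powr (r - 1) * (u - v)" using key that by simp
      moreover have "v powr r \<le> u powr r" using False that r by (intro powr_mono2) auto
      ultimately show ?thesis using False by (simp add: abs_if)
    qed
  qed
  have A: "\<bar>a\<bar> powr r \<le> M powr (r - 1) * \<bar>a\<bar>" using powr_le_max_mult[of "\<bar>a\<bar>" M r] r unfolding M_def by simp
  have B: "\<bar>b\<bar> powr r \<le> M powr (r - 1) * \<bar>b\<bar>" using powr_le_max_mult[of "\<bar>b\<bar>" M r] r unfolding M_def by simp
  have A': "M powr (r - 1) * \<bar>a\<bar> \<le> r * M powr (r - 1) * \<bar>a\<bar>"
    using mult_right_mono[OF r, of "M powr (r - 1) * \<bar>a\<bar>"] MP by (simp add: mult.assoc)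
  have B': "M powr (r - 1) * \<bar>b\<bar> \<le> r * M powr (r - 1) * \<bar>b\<bar>"
    using mult_right_mono[OF r, of "M powr (r - 1) * \<bar>b\<bar>"] MP by (simp add: mult.assoc)
  consider "a \<ge> 0" "b \<ge> 0" | "a \<le> 0" "b \<le> 0" | "a > 0" "b < 0" | "a < 0" "b > 0" by linarith
  then show ?thesis
  proof cases
    case 1
    then have "\<bar>sgn a * \<bar>a\<bar> powr r - sgn b * \<bar>b\<bar> powr r\<bar> = \<bar>\<bar>a\<bar> powr r - \<bar>b\<bar> powr r\<bar>"
      by (cases "a = 0"; cases "b = 0") (auto simp: sgn_if)
    also have "\<dots> \<le> r * M powr (r - 1) * \<bar>\<bar>a\<bar> - \<bar>b\<bar>\<bar>" using same[of "\<bar>a\<bar>" "\<bar>b\<bar>"] M_def by simp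
    also have "\<bar>\<bar>a\<bar> - \<bar>b\<bar>\<bar> = \<bar>a - b\<bar>" using 1 by simp
    finally show ?thesis unfolding M_def .
  next
    case 2
    then have "\<bar>sgn a * \<bar>a\<bar> powr r - sgn b * \<bar>b\<bar> powr r\<bar> = \<bar>\<bar>a\<bar> powr r - \<bar>b\<bar> powr r\<bar>"
      by (cases "a = 0"; cases "b = 0") (auto simp: sgn_if abs_minus_commute)
    also have "\<dots> \<le> r * M powr (r - 1) * \<bar>\<bar>a\<bar> - \<bar>b\<bar>\<bar>" using same[of "\<bar>a\<bar>" "\<bar>b\<bar>"] M_def by simp
    also have "\<bar>\<bar>a\<bar> - \<bar>b\<bar>\<bar> = \<bar>a - b\<bar>" using 2 by simp
    finally show ?thesis unfolding M_def .
  next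
    case 3
    then have "\<bar>sgn a * \<bar>a\<bar> powr r - sgn b * \<bar>b\<bar> powr r\<bar> = \<bar>a\<bar> powr r + \<bar>b\<bar> powr r"
      by (simp add: sgn_if)
    also have "\<dots> \<le> r * M powr (r - 1) * \<bar>a\<bar> + r * M powr (r - 1) * \<bar>b\<bar>" using A B A' B' by linarith
    also have "\<dots> = r * M powr (r - 1) * \<bar>a - b\<bar>" using 3 by (simp add: algebra_simps)
    finally show ?thesis unfolding M_def .
  next
    case 4
    then have "\<bar>sgn a * \<bar>a\<bar> powr r - sgn b * \<bar>b\<bar> powr r\<bar> = \<bar>- (\<bar>a\<bar> powr r + \<bar>b\<bar> powr r)\<bar>"
      by (simp add: sgn_if)
    also have "\<dots> = \<bar>a\<bar> powr r + \<bar>b\<bar> powr r"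
      by (simp only: abs_minus_cancel) (simp add: abs_of_nonneg)
    also have "\<dots> \<le> r * M powr (r - 1) * \<bar>a\<bar> + r * M powr (r - 1) * \<bar>b\<bar>" using A B A' B' by linarith
    also have "\<dots> = r * M powr (r - 1) * \<bar>a - b\<bar>" using 4 by (simp add: algebra_simps)
    finally show ?thesis unfolding M_def .
  qed
qed


lemma pointwise_main:
  fixes x h q :: real assumes q: "2 \<le> q"
  shows "\<bar>x + h\<bar> powr q \<le> \<bar>x\<bar> powr q + q * sgn x * \<bar>x\<bar> powr (q - 1) * h
           + q * (q - 1) * ((\<bar>x\<bar> powr (q - 2) + \<bar>x + h\<bar> powr (q - 2)) * h\<^sup>2)"
proof -
  define s where "s = (\<lambda>y::real. sgn y * \<bar>y\<bar> powr (q - 1))"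
  have t: "\<bar>x + h\<bar> powr q + q * sgn (x + h) * \<bar>x + h\<bar> powr (q - 1) * (x - (x + h)) \<le> \<bar>x\<bar> powr q"
    using tangent_abs_powr[of q "x + h" x] q by simp
  then have 1: "\<bar>x + h\<bar> powr q \<le> \<bar>x\<bar> powr q + q * s x * h + q * ((s (x + h) - s x) * h)"
    unfolding s_def by (simp add: algebra_simps)
  have "(s (x + h) - s x) * h \<le> \<bar>s (x + h) - s x\<bar> * \<bar>h\<bar>"
    by (metis abs_ge_self abs_mult)
  also have "\<dots> \<le> (q - 1) * max \<bar>x + h\<bar> \<bar>x\<bar> powr (q - 1 - 1) * \<bar>x + h - x\<bar> * \<bar>h\<bar>"
    unfolding s_def using lipschitz_sgn_powr[of "q - 1" "x + h" x] q by (intro mult_right_mono) auto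
  also have "\<dots> = (q - 1) * (max \<bar>x + h\<bar> \<bar>x\<bar> powr (q - 2) * h\<^sup>2)"
    by (simp add: power2_eq_square)
  also have "\<dots> \<le> (q - 1) * ((\<bar>x\<bar> powr (q - 2) + \<bar>x + h\<bar> powr (q - 2)) * h\<^sup>2)"
  proof -
    have "max \<bar>x + h\<bar> \<bar>x\<bar> powr (q - 2) \<le> \<bar>x\<bar> powr (q - 2) + \<bar>x + h\<bar> powr (q - 2)"
      by (cases "\<bar>x + h\<bar> \<le> \<bar>x\<bar>") (auto simp: max_def)
    then show ?thesis using q by (intro mult_left_mono mult_right_mono) auto
  qed
  finally have 2: "(s (x + h) - s x) * h \<le> (q - 1) * ((\<bar>x\<bar> powr (q - 2) + \<bar>x + h\<bar> powr (q - 2)) * h\<^sup>2)" .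
  have 3: "q * ((s (x + h) - s x) * h) \<le> q * ((q - 1) * ((\<bar>x\<bar> powr (q - 2) + \<bar>x + h\<bar> powr (q - 2)) * h\<^sup>2))"
    using 2 q by (intro mult_left_mono) auto
  have 4: "\<bar>x + h\<bar> powr q \<le> \<bar>x\<bar> powr q + q * s x * h + q * ((q - 1) * ((\<bar>x\<bar> powr (q - 2) + \<bar>x + h\<bar> powr (q - 2)) * h\<^sup>2))"
    using order_trans[OF 1 add_left_mono[OF 3]] .
  have 5: "q * s x * h = q * sgn x * \<bar>x\<bar> powr (q - 1) * h"
    unfolding s_def by (simp add: mult.assoc)
  show ?thesis using 4 unfolding 5 by (simp only: mult.assoc)
qed

lemma final_algebra:
  fixes u v w s k :: real
  assumes u: "0 \<le> u" and v: "0 \<le> v" and w: "0 \<le> w" and s: "1 \<le> s" and k: "0 \<le> k"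
    and H: "u powr s \<le> v powr s + k * (v powr (s - 1) + u powr (s - 1)) * w"
  shows "u \<le> v + 2 * k * w"
proof (rule ccontr)
  assume "\<not> ?thesis"
  then have gt: "u > v + 2 * k * w" by simp
  have kw: "0 \<le> k * w" using k w by simp
  have u0: "u > 0" using gt v kw by linarith
  have vu: "v \<le> u" using gt kw by linarith
  have vs: "v powr (s - 1) \<le> u powr (s - 1)" using vu v s by (intro powr_mono2) auto
  have up: "u powr (s - 1) > 0" using u0 by simp
  have "u powr s = u powr (s - 1) * u" using powr_sub1_mult u s by simp
  moreover have "v powr s = v powr (s - 1) * v" using powr_sub1_mult v s by simp
  ultimately have "u powr (s - 1) * (u - k * w) \<le> v powr (s - 1) * (v + k * w)"
    using H by (simp add: algebra_simps)
  also have "\<dots> \<le> u powr (s - 1) * (v + k * w)"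
    using vs v kw by (intro mult_right_mono) auto
  finally have "u - k * w \<le> v + k * w" using up by simp
  then show False using gt by simp
qed

lemma holder_young:
  fixes f g :: "'a \<Rightarrow> real" and s t :: real
  assumes st: "s > 1" "t > 1" "1 / s + 1 / t = 1"
    and meas[measurable]: "f \<in> borel_measurable M" "g \<in> borel_measurable M"
    and nn: "\<And>x. 0 \<le> f x" "\<And>x. 0 \<le> g x"
    and intf: "integrable M (\<lambda>x. f x powr s)" and intg: "integrable M (\<lambda>x. g x powr t)"
  shows "integrable M (\<lambda>x. f x * g x)"
    "(\<integral>x. f x * g x \<partial>M) \<le> (\<integral>x. f x powr s \<partial>M) powr (1 / s) * (\<integral>x. g x powr t \<partial>M) powr (1 / t)"
proof -
  have Y: "f x * g x \<le> f x powr s / s + g x powr t / t" for x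
    using Youngs_inequality[OF st, of "f x" "g x"] nn by simp
  show int: "integrable M (\<lambda>x. f x * g x)"
  proof (rule Bochner_Integration.integrable_bound[of _ "\<lambda>x. f x powr s / s + g x powr t / t"])
    show "integrable M (\<lambda>x. f x powr s / s + g x powr t / t)" using intf intg by auto
    show "AE x in M. norm (f x * g x) \<le> norm (f x powr s / s + g x powr t / t)"
      using Y nn st by (auto intro!: AE_I2 simp: abs_of_nonneg)
  qed simp
  define a where "a = (\<integral>x. f x powr s \<partial>M)"
  define e where "e = (\<integral>x. g x powr t \<partial>M)"
  have a0: "0 \<le> a" unfolding a_def by (simp add: integral_nonneg_AE)
  have e0: "0 \<le> e" unfolding e_def by (simp add: integral_nonneg_AE)
  have fg0: "0 \<le> (\<integral>x. f x * g x \<partial>M)" using nn by (simp add: integral_nonneg_AE)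
  show "(\<integral>x. f x * g x \<partial>M) \<le> (\<integral>x. f x powr s \<partial>M) powr (1 / s) * (\<integral>x. g x powr t \<partial>M) powr (1 / t)"
  proof (cases "a = 0 \<or> e = 0")
    case True
    then have "AE x in M. f x * g x = 0"
    proof
      assume "a = 0"
      then have "AE x in M. f x powr s = 0" using integral_nonneg_eq_0_iff_AE[OF intf] unfolding a_def
        by (simp add: AE_I2)
      then show ?thesis by eventually_elim simp
    next
      assume "e = 0"
      then have "AE x in M. g x powr t = 0" using integral_nonneg_eq_0_iff_AE[OF intg] unfolding e_def
        by (simp add: AE_I2)
      then show ?thesis by eventually_elim simp
    qed
    then have "(\<integral>x. f x * g x \<partial>M) = 0" by (rule integral_eq_zero_AE)
    then show ?thesis by simp
  next
    case False
    then have ap: "a > 0" and ep: "e > 0" using a0 e0 by auto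
    define A where "A = a powr (1 / s)"
    define E where "E = e powr (1 / t)"
    have Ap: "A > 0" "A powr s = a" unfolding A_def using ap st by (auto simp: powr_powr)
    have Ep: "E > 0" "E powr t = e" unfolding E_def using ep st by (auto simp: powr_powr)
    have P: "f x * g x \<le> A * E * (f x powr s / (a * s) + g x powr t / (e * t))" for x
    proof -
      have "(f x / A) * (g x / E) \<le> (f x / A) powr s / s + (g x / E) powr t / t"
        using Youngs_inequality[OF st, of "f x / A" "g x / E"] nn Ap Ep by simp
      also have "\<dots> = f x powr s / (a * s) + g x powr t / (e * t)"
        using Ap Ep nn by (simp add: powr_divide)
      finally show ?thesis using Ap Ep by (simp add: field_simps)
    qed
    have "(\<integral>x. f x * g x \<partial>M) \<le> (\<integral>x. A * E * (f x powr s / (a * s) + g x powr t / (e * t)) \<partial>M)"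
      using P intf intg int by (intro integral_mono) auto
    also have "\<dots> = A * E * (a / (a * s) + e / (e * t))"
      using intf intg by (simp add: a_def e_def)
    also have "\<dots> = A * E" using ap ep st by simp
    finally show ?thesis unfolding A_def E_def a_def e_def .
  qed
qed


lemma abs_add_powr_le:
  fixes x h q :: real assumes q: "0 \<le> q"
  shows "\<bar>x + h\<bar> powr q \<le> 2 powr q * (\<bar>x\<bar> powr q + \<bar>h\<bar> powr q)"
proof -
  have "\<bar>x + h\<bar> \<le> 2 * max \<bar>x\<bar> \<bar>h\<bar>" by linarith
  then have "\<bar>x + h\<bar> powr q \<le> (2 * max \<bar>x\<bar> \<bar>h\<bar>) powr q" using q by (intro powr_mono2) auto
  also have "\<dots> = 2 powr q * max \<bar>x\<bar> \<bar>h\<bar> powr q" by (simp add: powr_mult)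
  also have "max \<bar>x\<bar> \<bar>h\<bar> powr q \<le> \<bar>x\<bar> powr q + \<bar>h\<bar> powr q" by (simp add: max_def)
  finally show ?thesis by simp
qed

lemma lp_norm_nonneg: "0 \<le> lp_norm M q f"
  unfolding lp_norm_def by simp

lemma lp_norm_sq: "(lp_norm M q f)\<^sup>2 = (\<integral>x. \<bar>f x\<bar> powr q \<partial>M) powr (2 / q)"
  unfolding lp_norm_def power2_eq_square by (simp add: powr_add[symmetric])

lemma holder_pow:
  fixes Y D :: "'a \<Rightarrow> real" and q :: real
  assumes q: "2 \<le> q" and [measurable]: "Y \<in> borel_measurable M" "D \<in> borel_measurable M"
    and iY: "integrable M (\<lambda>x. \<bar>Y x\<bar> powr q)" and iD: "integrable M (\<lambda>x. \<bar>D x\<bar> powr q)"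
  shows "integrable M (\<lambda>x. \<bar>Y x\<bar> powr (q - 2) * (D x)\<^sup>2)"
    "(\<integral>x. \<bar>Y x\<bar> powr (q - 2) * (D x)\<^sup>2 \<partial>M)
       \<le> (\<integral>x. \<bar>Y x\<bar> powr q \<partial>M) powr ((q - 2) / q) * (\<integral>x. \<bar>D x\<bar> powr q \<partial>M) powr (2 / q)"
proof -
  have sq: "(D x)\<^sup>2 = \<bar>D x\<bar> powr 2" for x by simp
  have "integrable M (\<lambda>x. \<bar>Y x\<bar> powr (q - 2) * (D x)\<^sup>2) \<and>
    (\<integral>x. \<bar>Y x\<bar> powr (q - 2) * (D x)\<^sup>2 \<partial>M)
       \<le> (\<integral>x. \<bar>Y x\<bar> powr q \<partial>M) powr ((q - 2) / q) * (\<integral>x. \<bar>D x\<bar> powr q \<partial>M) powr (2 / q)"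
  proof (cases "q = 2")
    case True
    have iD2: "integrable M (\<lambda>x. (D x)\<^sup>2)" using iD True by simp
    have int: "integrable M (\<lambda>x. \<bar>Y x\<bar> powr (q - 2) * (D x)\<^sup>2)"
      by (rule Bochner_Integration.integrable_bound[OF iD2]) (auto simp: True)
    moreover have "(\<integral>x. \<bar>Y x\<bar> powr (q - 2) * (D x)\<^sup>2 \<partial>M)
       \<le> (\<integral>x. \<bar>Y x\<bar> powr q \<partial>M) powr ((q - 2) / q) * (\<integral>x. \<bar>D x\<bar> powr q \<partial>M) powr (2 / q)"
    proof (cases "(\<integral>x. \<bar>Y x\<bar> powr q \<partial>M) = 0")
      case z: True
      then have "AE x in M. \<bar>Y x\<bar> powr q = 0" using integral_nonneg_eq_0_iff_AE[OF iY] by simp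
      then have "AE x in M. \<bar>Y x\<bar> powr (q - 2) * (D x)\<^sup>2 = 0" by eventually_elim simp
      then have "(\<integral>x. \<bar>Y x\<bar> powr (q - 2) * (D x)\<^sup>2 \<partial>M) = 0" by (rule integral_eq_zero_AE)
      then show ?thesis by simp
    next
      case nz: False
      have "(\<integral>x. \<bar>Y x\<bar> powr (q - 2) * (D x)\<^sup>2 \<partial>M) \<le> (\<integral>x. (D x)\<^sup>2 \<partial>M)"
        using int iD2 True by (intro integral_mono) auto
      also have "\<dots> = (\<integral>x. \<bar>D x\<bar> powr q \<partial>M) powr (2 / q)"
        using True by (simp add: integral_nonneg_AE)
      finally show ?thesis using True nz by simp
    qed
    ultimately show ?thesis by simp
  next
    case False
    then have q2: "q > 2" using q by simp
    have e1: "(\<lambda>x. (\<bar>Y x\<bar> powr (q - 2)) powr (q / (q - 2))) = (\<lambda>x. \<bar>Y x\<bar> powr q)"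
      using q2 by (simp add: powr_powr)
    have e2: "(\<lambda>x. (\<bar>D x\<bar> powr 2) powr (q / 2)) = (\<lambda>x. \<bar>D x\<bar> powr q)"
      by (rule ext, simp only: powr_powr, simp)
    have H: "integrable M (\<lambda>x. \<bar>Y x\<bar> powr (q - 2) * \<bar>D x\<bar> powr 2) \<and>
      (\<integral>x. \<bar>Y x\<bar> powr (q - 2) * \<bar>D x\<bar> powr 2 \<partial>M) \<le>
        (\<integral>x. (\<bar>Y x\<bar> powr (q - 2)) powr (q / (q - 2)) \<partial>M) powr (1 / (q / (q - 2))) *
        (\<integral>x. (\<bar>D x\<bar> powr 2) powr (q / 2) \<partial>M) powr (1 / (q / 2))"
      using holder_young[of "q / (q - 2)" "q / 2" "\<lambda>x. \<bar>Y x\<bar> powr (q - 2)" M "\<lambda>x. \<bar>D x\<bar> powr 2"]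
        q2 iY iD unfolding e1 e2 by (auto simp: field_simps)
    show ?thesis using H unfolding e1 e2 sq by simp
  qed
  then show "integrable M (\<lambda>x. \<bar>Y x\<bar> powr (q - 2) * (D x)\<^sup>2)"
    "(\<integral>x. \<bar>Y x\<bar> powr (q - 2) * (D x)\<^sup>2 \<partial>M)
       \<le> (\<integral>x. \<bar>Y x\<bar> powr q \<partial>M) powr ((q - 2) / q) * (\<integral>x. \<bar>D x\<bar> powr q \<partial>M) powr (2 / q)"
    by auto
qed

lemma one_step:
  fixes X D :: "'a \<Rightarrow> real" and q :: real
  assumes P: "prob_space M" and sub: "subalgebra M F"
    and X[measurable]: "X \<in> borel_measurable F" and D[measurable]: "D \<in> borel_measurable M"
    and ce: "AE x in M. real_cond_exp M F D x = 0"
    and q: "2 \<le> q"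
    and iX: "integrable M (\<lambda>x. \<bar>X x\<bar> powr q)" and iD: "integrable M (\<lambda>x. \<bar>D x\<bar> powr q)"
  shows "integrable M (\<lambda>x. \<bar>X x + D x\<bar> powr q)"
    "(lp_norm M q (\<lambda>x. X x + D x))\<^sup>2 \<le> (lp_norm M q X)\<^sup>2 + 2 * q * (q - 1) * (lp_norm M q D)\<^sup>2"
proof -
  interpret prob_space M by fact
  have "finite_measure_subalgebra M F"
    by (rule finite_measure_subalgebra.intro) (auto simp: sub finite_measure_axioms finite_measure_subalgebra_axioms_def)
  then interpret sigma_finite_subalgebra M F by (rule finite_measure_subalgebra_is_sigma_finite)
  have XM[measurable]: "X \<in> borel_measurable M" using measurable_from_subalg[OF sub X] .
  show iS: "integrable M (\<lambda>x. \<bar>X x + D x\<bar> powr q)"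
  proof (rule Bochner_Integration.integrable_bound[of _ "\<lambda>x. 2 powr q * (\<bar>X x\<bar> powr q + \<bar>D x\<bar> powr q)"])
    show "integrable M (\<lambda>x. 2 powr q * (\<bar>X x\<bar> powr q + \<bar>D x\<bar> powr q))" using iX iD by auto
    show "AE x in M. norm (\<bar>X x + D x\<bar> powr q) \<le> norm (2 powr q * (\<bar>X x\<bar> powr q + \<bar>D x\<bar> powr q))"
      using abs_add_powr_le q by (intro AE_I2) auto
  qed simp
  define f where "f = (\<lambda>x. q * sgn (X x) * \<bar>X x\<bar> powr (q - 1))"
  have fF[measurable]: "f \<in> borel_measurable F" unfolding f_def by measurable
  have fM[measurable]: "f \<in> borel_measurable M" using measurable_from_subalg[OF sub fF] .
  have i1: "integrable M (\<lambda>x. \<bar>X x\<bar> powr (q - 1) * \<bar>D x\<bar>)"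
  proof -
    have e1: "(\<lambda>x. (\<bar>X x\<bar> powr (q - 1)) powr (q / (q - 1))) = (\<lambda>x. \<bar>X x\<bar> powr q)"
      using q by (simp add: powr_powr)
    show ?thesis
      using holder_young(1)[of "q / (q - 1)" q "\<lambda>x. \<bar>X x\<bar> powr (q - 1)" M "\<lambda>x. \<bar>D x\<bar>"] q iX iD
      unfolding e1 by (auto simp: field_simps)
  qed
  have ifD: "integrable M (\<lambda>x. f x * D x)"
  proof (rule Bochner_Integration.integrable_bound[of _ "\<lambda>x. q * (\<bar>X x\<bar> powr (q - 1) * \<bar>D x\<bar>)"])
    show "integrable M (\<lambda>x. q * (\<bar>X x\<bar> powr (q - 1) * \<bar>D x\<bar>))" using i1 by simp
    show "AE x in M. norm (f x * D x) \<le> norm (q * (\<bar>X x\<bar> powr (q - 1) * \<bar>D x\<bar>))"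
      using q by (intro AE_I2) (auto simp: f_def abs_mult abs_sgn_eq)
  qed measurable
  have fD0: "(\<integral>x. f x * D x \<partial>M) = 0"
  proof -
    have "(\<integral>x. f x * real_cond_exp M F D x \<partial>M) = (\<integral>x. f x * D x \<partial>M)"
      by (rule real_cond_exp_intg(2)[OF ifD fF D])
    moreover have "(\<integral>x. f x * real_cond_exp M F D x \<partial>M) = 0"
      using ce by (intro integral_eq_zero_AE) (auto elim: AE_mp)
    ultimately show ?thesis by simp
  qed
  define a where "a = (\<integral>x. \<bar>X x\<bar> powr q \<partial>M)"
  define b where "b = (\<integral>x. \<bar>X x + D x\<bar> powr q \<partial>M)"
  define e where "e = (\<integral>x. \<bar>D x\<bar> powr q \<partial>M)"
  have a0: "0 \<le> a" and b0: "0 \<le> b" and e0: "0 \<le> e"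
    unfolding a_def b_def e_def by (simp_all add: integral_nonneg_AE)
  note H1 = holder_pow[OF q XM D iX iD]
  note H2 = holder_pow[OF q _ D iS iD]
  have T: "\<bar>X x + D x\<bar> powr q \<le> \<bar>X x\<bar> powr q + f x * D x
      + q * (q - 1) * (\<bar>X x\<bar> powr (q - 2) * (D x)\<^sup>2 + \<bar>X x + D x\<bar> powr (q - 2) * (D x)\<^sup>2)" for x
    using pointwise_main[OF q, of "X x" "D x"] unfolding f_def by (simp add: algebra_simps)
  have "b \<le> (\<integral>x. \<bar>X x\<bar> powr q + f x * D x
      + q * (q - 1) * (\<bar>X x\<bar> powr (q - 2) * (D x)\<^sup>2 + \<bar>X x + D x\<bar> powr (q - 2) * (D x)\<^sup>2) \<partial>M)"
    unfolding b_def using T iS iX ifD H1(1) H2(1) by (intro integral_mono) auto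
  also have "\<dots> = a + 0 + q * (q - 1) * ((\<integral>x. \<bar>X x\<bar> powr (q - 2) * (D x)\<^sup>2 \<partial>M)
      + (\<integral>x. \<bar>X x + D x\<bar> powr (q - 2) * (D x)\<^sup>2 \<partial>M))"
    using iX ifD H1(1) H2(1) fD0 unfolding a_def by simp
  also have "\<dots> \<le> a + q * (q - 1) * (a powr ((q - 2) / q) * e powr (2 / q) + b powr ((q - 2) / q) * e powr (2 / q))"
    using H1(2) H2(2) q unfolding a_def b_def e_def by (intro add_left_mono mult_left_mono add_mono) auto
  finally have main: "b \<le> a + q * (q - 1) * (a powr ((q - 2) / q) + b powr ((q - 2) / q)) * e powr (2 / q)"
    by (simp add: algebra_simps)
  have ex: "2 / q * (q / 2 - 1) = (q - 2) / q" using q by (simp add: field_simps)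
  have fa: "b powr (2 / q) \<le> a powr (2 / q) + 2 * (q * (q - 1)) * e powr (2 / q)"
  proof (rule final_algebra[where s = "q / 2"])
    show "(b powr (2 / q)) powr (q / 2) \<le> (a powr (2 / q)) powr (q / 2)
       + q * (q - 1) * ((a powr (2 / q)) powr (q / 2 - 1) + (b powr (2 / q)) powr (q / 2 - 1)) * e powr (2 / q)"
      using main q a0 b0 by (simp add: powr_powr ex)
  qed (use q in auto)
  then show "(lp_norm M q (\<lambda>x. X x + D x))\<^sup>2 \<le> (lp_norm M q X)\<^sup>2 + 2 * q * (q - 1) * (lp_norm M q D)\<^sup>2"
    unfolding lp_norm_sq a_def b_def e_def by (simp add: algebra_simps)
qed

lemma meas_mono:
  assumes sub: "\<forall>i. subalgebra M (F i)" and mono: "\<forall>i j. i \<le> j \<longrightarrow> sets (F i) \<subseteq> sets (F j)"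
    and f: "f \<in> borel_measurable (F i)" and ij: "i \<le> j"
  shows "f \<in> borel_measurable (F j)"
proof -
  have "subalgebra (F j) (F i)" using sub mono ij unfolding subalgebra_def by auto
  then show ?thesis using measurable_from_subalg f by blast
qed

lemma lp_norm_zero: "lp_norm M q (\<lambda>x. 0) = 0"
  unfolding lp_norm_def by simp

lemma mart_sum:
  fixes D :: "nat \<Rightarrow> 'a \<Rightarrow> real"
  assumes P: "prob_space M" and sub: "\<forall>i. subalgebra M (F i)"
    and mono: "\<forall>i j. i \<le> j \<longrightarrow> sets (F i) \<subseteq> sets (F j)"
    and q: "2 \<le> q"
  shows "(\<forall>i\<in>{1..n}. D i \<in> borel_measurable (F i) \<and> integrable M (\<lambda>x. \<bar>D i x\<bar> powr q)
            \<and> (AE x in M. real_cond_exp M (F (i - 1)) (D i) x = 0)) \<Longrightarrow>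
    (\<lambda>x. \<Sum>i\<in>{1..n}. D i x) \<in> borel_measurable (F n) \<and>
    integrable M (\<lambda>x. \<bar>\<Sum>i\<in>{1..n}. D i x\<bar> powr q) \<and>
    (lp_norm M q (\<lambda>x. \<Sum>i\<in>{1..n}. D i x))\<^sup>2 \<le> 2 * q * (q - 1) * (\<Sum>i\<in>{1..n}. (lp_norm M q (D i))\<^sup>2)"
proof (induction n)
  case 0
  show ?case by (simp add: lp_norm_zero)
next
  case (Suc n)
  define S where "S = (\<lambda>x. \<Sum>i\<in>{1..n}. D i x)"
  have IH: "S \<in> borel_measurable (F n) \<and> integrable M (\<lambda>x. \<bar>S x\<bar> powr q) \<and>
    (lp_norm M q S)\<^sup>2 \<le> 2 * q * (q - 1) * (\<Sum>i\<in>{1..n}. (lp_norm M q (D i))\<^sup>2)"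
  proof -
    have "\<forall>i\<in>{1..n}. D i \<in> borel_measurable (F i) \<and> integrable M (\<lambda>x. \<bar>D i x\<bar> powr q)
            \<and> (AE x in M. real_cond_exp M (F (i - 1)) (D i) x = 0)"
    proof
      fix i assume "i \<in> {1..n}"
      then have "i \<in> {1..Suc n}" by simp
      then show "D i \<in> borel_measurable (F i) \<and> integrable M (\<lambda>x. \<bar>D i x\<bar> powr q)
            \<and> (AE x in M. real_cond_exp M (F (i - 1)) (D i) x = 0)" using Suc.prems by blast
    qed
    from Suc.IH[OF this] show ?thesis unfolding S_def .
  qed
  have DS: "D (Suc n) \<in> borel_measurable (F (Suc n))" "integrable M (\<lambda>x. \<bar>D (Suc n) x\<bar> powr q)"
    "AE x in M. real_cond_exp M (F n) (D (Suc n)) x = 0"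
    using bspec[OF Suc.prems, of "Suc n"] by auto
  have DM: "D (Suc n) \<in> borel_measurable M"
    using measurable_from_subalg[of M "F (Suc n)"] sub DS(1) by blast
  have sumeq: "\<And>x. (\<Sum>i\<in>{1..Suc n}. D i x) = S x + D (Suc n) x"
    unfolding S_def by (simp add: sum.cl_ivl_Suc)
  have SF: "S \<in> borel_measurable (F n)" using IH by blast
  have SI: "integrable M (\<lambda>x. \<bar>S x\<bar> powr q)" using IH by blast
  have subn: "subalgebra M (F n)" using sub by blast
  note OS = one_step[OF P subn SF DM DS(3) q SI DS(2)]
  have m1: "S \<in> borel_measurable (F (Suc n))" using meas_mono[OF sub mono SF] by simp
  have r1: "(\<lambda>x. S x + D (Suc n) x) \<in> borel_measurable (F (Suc n))"
    using borel_measurable_add[OF m1 DS(1)] .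
  have r2: "integrable M (\<lambda>x. \<bar>S x + D (Suc n) x\<bar> powr q)" using OS(1) .
  have r3: "(lp_norm M q (\<lambda>x. S x + D (Suc n) x))\<^sup>2 \<le> 2 * q * (q - 1) * (\<Sum>i\<in>{1..Suc n}. (lp_norm M q (D i))\<^sup>2)"
  proof -
    have "(lp_norm M q (\<lambda>x. S x + D (Suc n) x))\<^sup>2 \<le> (lp_norm M q S)\<^sup>2 + 2 * q * (q - 1) * (lp_norm M q (D (Suc n)))\<^sup>2"
      using OS(2) .
    also have "\<dots> \<le> 2 * q * (q - 1) * (\<Sum>i\<in>{1..n}. (lp_norm M q (D i))\<^sup>2) + 2 * q * (q - 1) * (lp_norm M q (D (Suc n)))\<^sup>2"
      using IH by (intro add_right_mono) blast
    also have "\<dots> = 2 * q * (q - 1) * (\<Sum>i\<in>{1..Suc n}. (lp_norm M q (D i))\<^sup>2)"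
      by (simp add: sum.cl_ivl_Suc distrib_left)
    finally show ?thesis .
  qed
  show ?case by (simp only: sumeq) (intro conjI r1 r2 r3)
qed

lemma finite_idx: "finite (idx_set k n)"
proof -
  have "idx_set k n \<subseteq> {xs. set xs \<subseteq> {1..n} \<and> length xs = k}" unfolding idx_set_def by auto
  moreover have "finite {xs. set xs \<subseteq> {1..n} \<and> length xs = k}" by (rule finite_lists_length_eq) simp
  ultimately show ?thesis by (rule finite_subset)
qed

lemma idx_set_0: "idx_set 0 n = {[]}"
  unfolding idx_set_def by auto

lemma idx_set_Suc_0: "idx_set (Suc k) 0 = {}"
  unfolding idx_set_def by (auto simp: length_Suc_conv)

lemma idx_set_Suc_Suc:
  "idx_set (Suc k) (Suc n) = idx_set (Suc k) n \<union> (\<lambda>I. I @ [Suc n]) ` idx_set k n"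
proof (intro equalityI subsetI)
  fix I assume I: "I \<in> idx_set (Suc k) (Suc n)"
  show "I \<in> idx_set (Suc k) n \<union> (\<lambda>I. I @ [Suc n]) ` idx_set k n"
  proof (cases "Suc n \<in> set I")
    case False
    then have "set I \<subseteq> {1..n}" using I unfolding idx_set_def by (auto simp: subset_iff le_Suc_eq)
    then show ?thesis using I unfolding idx_set_def by auto
  next
    case True
    then have "I \<noteq> []" by auto
    then obtain xs y where xy: "I = xs @ [y]" by (metis rev_exhaust)
    have sw: "sorted_wrt (<) xs" "\<forall>x\<in>set xs. x < y" using I xy unfolding idx_set_def
      by (auto simp: sorted_wrt_append)
    have ys: "y \<in> {1..Suc n}" "set xs \<subseteq> {1..Suc n}" using I xy unfolding idx_set_def by auto
    have "y = Suc n"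
    proof (rule ccontr)
      assume "y \<noteq> Suc n"
      then have "Suc n \<in> set xs" using True xy by auto
      then have "Suc n < y" using sw by auto
      then show False using ys by auto
    qed
    then have "set xs \<subseteq> {1..n}" using sw ys by (auto simp: subset_iff less_Suc_eq_le)
    then have "xs \<in> idx_set k n" using I xy sw unfolding idx_set_def by auto
    then show ?thesis using xy \<open>y = Suc n\<close> by auto
  qed
next
  fix I assume "I \<in> idx_set (Suc k) n \<union> (\<lambda>I. I @ [Suc n]) ` idx_set k n"
  then show "I \<in> idx_set (Suc k) (Suc n)"
  proof
    assume "I \<in> idx_set (Suc k) n" then show ?thesis unfolding idx_set_def by auto
  next
    assume "I \<in> (\<lambda>I. I @ [Suc n]) ` idx_set k n"
    then obtain J where J: "J \<in> idx_set k n" "I = J @ [Suc n]" by auto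
    then show ?thesis unfolding idx_set_def by (auto simp: sorted_wrt_append less_Suc_eq_le subset_iff)
  qed
qed

lemma sum_idx_Suc:
  "(\<Sum>I\<in>idx_set (Suc k) n. g I) = (\<Sum>i\<in>{1..n}. \<Sum>J\<in>idx_set k (i - 1). g (J @ [i]))"
proof (induction n)
  case 0
  then show ?case by (simp add: idx_set_Suc_0)
next
  case (Suc n)
  have disj: "idx_set (Suc k) n \<inter> (\<lambda>I. I @ [Suc n]) ` idx_set k n = {}"
    unfolding idx_set_def by auto
  have inj: "inj_on (\<lambda>I. I @ [Suc n]) (idx_set k n)" by (auto simp: inj_on_def)
  have "(\<Sum>I\<in>idx_set (Suc k) (Suc n). g I) = (\<Sum>I\<in>idx_set (Suc k) n. g I) + (\<Sum>I\<in>(\<lambda>I. I @ [Suc n]) ` idx_set k n. g I)"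
    unfolding idx_set_Suc_Suc by (rule sum.union_disjoint) (auto simp: finite_idx disj)
  also have "(\<Sum>I\<in>(\<lambda>I. I @ [Suc n]) ` idx_set k n. g I) = (\<Sum>J\<in>idx_set k n. g (J @ [Suc n]))"
    by (simp add: sum.reindex[OF inj])
  finally show ?case using Suc.IH by (simp add: sum.cl_ivl_Suc)
qed

lemma xi_prod_snoc:
  assumes "length J = k"
  shows "xi_prod \<xi> (Suc k) (J @ [i]) x = xi_prod \<xi> k J x * \<xi> i (Suc k) x"
proof -
  have "(\<Prod>m\<in>{1..k}. \<xi> ((J @ [i]) ! (m - 1)) m x) = (\<Prod>m\<in>{1..k}. \<xi> (J ! (m - 1)) m x)"
    using assms by (intro prod.cong) (auto simp: nth_append)
  then show ?thesis unfolding xi_prod_def using assms by (simp add: prod.cl_ivl_Suc nth_append)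
qed

lemma Qd_0: "Qd \<xi> 0 n b x = b []"
  unfolding Qd_def xi_prod_def by (simp add: idx_set_0)

lemma Qd_Suc:
  "Qd \<xi> (Suc k) n b x = (\<Sum>i\<in>{1..n}. \<xi> i (Suc k) x * Qd \<xi> k (i - 1) (\<lambda>J. b (J @ [i])) x)"
proof -
  have "Qd \<xi> (Suc k) n b x = (\<Sum>i\<in>{1..n}. \<Sum>J\<in>idx_set k (i - 1). b (J @ [i]) * xi_prod \<xi> (Suc k) (J @ [i]) x)"
    unfolding Qd_def by (rule sum_idx_Suc)
  also have "\<dots> = (\<Sum>i\<in>{1..n}. \<xi> i (Suc k) x * Qd \<xi> k (i - 1) (\<lambda>J. b (J @ [i])) x)"
  proof (rule sum.cong[OF refl])
    fix i assume "i \<in> {1..n}"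
    have "(\<Sum>J\<in>idx_set k (i - 1). b (J @ [i]) * xi_prod \<xi> (Suc k) (J @ [i]) x)
        = (\<Sum>J\<in>idx_set k (i - 1). \<xi> i (Suc k) x * (b (J @ [i]) * xi_prod \<xi> k J x))"
      by (intro sum.cong refl) (auto simp: xi_prod_snoc idx_set_def)
    also have "\<dots> = \<xi> i (Suc k) x * Qd \<xi> k (i - 1) (\<lambda>J. b (J @ [i])) x"
      unfolding Qd_def by (simp add: sum_distrib_left)
    finally show "(\<Sum>J\<in>idx_set k (i - 1). b (J @ [i]) * xi_prod \<xi> (Suc k) (J @ [i]) x)
        = \<xi> i (Suc k) x * Qd \<xi> k (i - 1) (\<lambda>J. b (J @ [i])) x" .
  qed
  finally show ?thesis .
qed

lemma Qd_meas:
  assumes sub: "\<forall>i. subalgebra M (F i)" and mono: "\<forall>i j. i \<le> j \<longrightarrow> sets (F i) \<subseteq> sets (F j)"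
    and xm: "\<forall>i\<in>{1..n}. \<forall>m\<in>{1..k}. \<xi> i m \<in> borel_measurable (F i)"
  shows "Qd \<xi> k n b \<in> borel_measurable (F n)"
proof -
  have *: "\<xi> (I ! (m - 1)) m \<in> borel_measurable (F n)" if I: "I \<in> idx_set k n" and m: "m \<in> {1..k}" for I m
  proof -
    have "m - 1 < length I" using I m unfolding idx_set_def by auto
    then have "I ! (m - 1) \<in> set I" by simp
    then have "I ! (m - 1) \<in> {1..n}" using I unfolding idx_set_def by auto
    then show ?thesis using meas_mono[OF sub mono, of "\<xi> (I ! (m - 1)) m" "I ! (m - 1)" n] xm m by auto
  qed
  show ?thesis unfolding Qd_def[abs_def] xi_prod_def
    by (intro borel_measurable_sum borel_measurable_times borel_measurable_prod borel_measurable_const *) auto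
qed

lemma int_from_powr:
  fixes f :: "'a \<Rightarrow> real"
  assumes P: "prob_space M" and q: "1 \<le> q" and fm[measurable]: "f \<in> borel_measurable M"
    and i: "integrable M (\<lambda>x. \<bar>f x\<bar> powr q)"
  shows "integrable M f"
proof -
  interpret prob_space M by fact
  show ?thesis
  proof (rule Bochner_Integration.integrable_bound[of _ "\<lambda>x. 1 + \<bar>f x\<bar> powr q"])
    show "integrable M (\<lambda>x. 1 + \<bar>f x\<bar> powr q)" using i by simp
    have "\<bar>f x\<bar> \<le> 1 + \<bar>f x\<bar> powr q" for x
    proof (cases "\<bar>f x\<bar> \<le> 1")
      case True then show ?thesis by (smt (verit) powr_ge_zero)
    next
      case False
      then have "\<bar>f x\<bar> powr 1 \<le> \<bar>f x\<bar> powr q" using q by (intro powr_mono) auto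
      then show ?thesis using False by simp
    qed
    moreover have "norm (1 + \<bar>f x\<bar> powr q) = 1 + \<bar>f x\<bar> powr q" for x
      by (simp add: abs_of_nonneg add_nonneg_nonneg)
    ultimately show "AE x in M. norm (f x) \<le> norm (1 + \<bar>f x\<bar> powr q)"
      by (intro AE_I2) simp
  qed simp
qed

lemma sigma_fin:
  assumes "prob_space M" "subalgebra M G"
  shows "sigma_finite_subalgebra M G"
proof -
  interpret prob_space M by fact
  have "finite_measure_subalgebra M G"
    by (rule finite_measure_subalgebra.intro) (auto simp: assms finite_measure_axioms finite_measure_subalgebra_axioms_def)
  then show ?thesis by (rule finite_measure_subalgebra_is_sigma_finite)
qed

lemma cond_exp_prod_zero:
  fixes Y Z :: "'a \<Rightarrow> real"
  assumes P: "prob_space M" and sub: "subalgebra M G"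
    and Y[measurable]: "Y \<in> borel_measurable G" and Z[measurable]: "Z \<in> borel_measurable M"
    and ce: "AE x in M. real_cond_exp M G Z x = 0"
    and i: "integrable M (\<lambda>x. Z x * Y x)"
  shows "AE x in M. real_cond_exp M G (\<lambda>x. Z x * Y x) x = 0"
proof -
  interpret sigma_finite_subalgebra M G using sigma_fin[OF P sub] .
  have e: "(\<lambda>x. Z x * Y x) = (\<lambda>x. Y x * Z x)" by (auto simp: mult.commute)
  have i': "integrable M (\<lambda>x. Y x * Z x)" using i unfolding e .
  have "AE x in M. real_cond_exp M G (\<lambda>x. Y x * Z x) x = Y x * real_cond_exp M G Z x"
    by (rule real_cond_exp_mult[OF Y Z i'])
  then show ?thesis unfolding e using ce by eventually_elim simp
qed

lemma lp_holder:
  fixes f g :: "'a \<Rightarrow> real" and s t q :: real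
  assumes st: "s > 1" "t > 1" "1 / s + 1 / t = 1" and q: "q > 0"
    and [measurable]: "f \<in> borel_measurable M" "g \<in> borel_measurable M"
    and iF: "integrable M (\<lambda>x. \<bar>f x\<bar> powr (s * q))" and iG: "integrable M (\<lambda>x. \<bar>g x\<bar> powr (t * q))"
  shows "integrable M (\<lambda>x. \<bar>f x * g x\<bar> powr q)"
    "lp_norm M q (\<lambda>x. f x * g x) \<le> lp_norm M (s * q) f * lp_norm M (t * q) g"
proof -
  have e1: "(\<lambda>x. (\<bar>f x\<bar> powr q) powr s) = (\<lambda>x. \<bar>f x\<bar> powr (s * q))" by (simp add: powr_powr mult.commute)
  have e2: "(\<lambda>x. (\<bar>g x\<bar> powr q) powr t) = (\<lambda>x. \<bar>g x\<bar> powr (t * q))" by (simp add: powr_powr mult.commute)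
  have e3: "(\<lambda>x. \<bar>f x * g x\<bar> powr q) = (\<lambda>x. \<bar>f x\<bar> powr q * \<bar>g x\<bar> powr q)"
    by (simp add: abs_mult powr_mult)
  note H = holder_young[OF st, of "\<lambda>x. \<bar>f x\<bar> powr q" M "\<lambda>x. \<bar>g x\<bar> powr q", unfolded e1 e2]
  show "integrable M (\<lambda>x. \<bar>f x * g x\<bar> powr q)" unfolding e3 using H iF iG by simp
  have le: "(\<integral>x. \<bar>f x\<bar> powr q * \<bar>g x\<bar> powr q \<partial>M)
      \<le> (\<integral>x. \<bar>f x\<bar> powr (s * q) \<partial>M) powr (1 / s) * (\<integral>x. \<bar>g x\<bar> powr (t * q) \<partial>M) powr (1 / t)"
    using H iF iG by simp
  have A0: "0 \<le> (\<integral>x. \<bar>f x\<bar> powr (s * q) \<partial>M)" by (simp add: integral_nonneg_AE)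
  have B0: "0 \<le> (\<integral>x. \<bar>g x\<bar> powr (t * q) \<partial>M)" by (simp add: integral_nonneg_AE)
  have "lp_norm M q (\<lambda>x. f x * g x) = (\<integral>x. \<bar>f x\<bar> powr q * \<bar>g x\<bar> powr q \<partial>M) powr (1 / q)"
    unfolding lp_norm_def e3 ..
  also have "\<dots> \<le> ((\<integral>x. \<bar>f x\<bar> powr (s * q) \<partial>M) powr (1 / s) * (\<integral>x. \<bar>g x\<bar> powr (t * q) \<partial>M) powr (1 / t)) powr (1 / q)"
    using le q by (intro powr_mono2) (auto simp: integral_nonneg_AE)
  also have "\<dots> = lp_norm M (s * q) f * lp_norm M (t * q) g"
    unfolding lp_norm_def using A0 B0 by (simp add: powr_mult powr_powr)
  finally show "lp_norm M q (\<lambda>x. f x * g x) \<le> lp_norm M (s * q) f * lp_norm M (t * q) g" .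
qed

lemma gamma_c_nonneg: "0 \<le> gamma_c k"
  by (induction k rule: gamma_c.induct) auto

definition hyp :: "'a measure \<Rightarrow> (nat \<Rightarrow> 'a measure) \<Rightarrow> (nat \<Rightarrow> nat \<Rightarrow> 'a \<Rightarrow> real) \<Rightarrow> nat \<Rightarrow> nat \<Rightarrow> real \<Rightarrow> (nat \<Rightarrow> real) \<Rightarrow> bool" where
  "hyp M F \<xi> k n r c \<longleftrightarrow> (\<forall>i\<in>{1..n}. \<forall>m\<in>{1..k}. \<xi> i m \<in> borel_measurable (F i) \<and>
      (AE x in M. real_cond_exp M (F (i - 1)) (\<xi> i m) x = 0) \<and>
      integrable M (\<lambda>x. \<bar>\<xi> i m x\<bar> powr r) \<and> lp_norm M r (\<xi> i m) \<le> c m)"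

lemma lp_norm_cmult:
  assumes q: "q > 0"
  shows "lp_norm M q (\<lambda>x. f x * a) = \<bar>a\<bar> * lp_norm M q f"
proof -
  have "(\<lambda>x. \<bar>f x * a\<bar> powr q) = (\<lambda>x. \<bar>f x\<bar> powr q * \<bar>a\<bar> powr q)" by (simp add: abs_mult powr_mult)
  then have "lp_norm M q (\<lambda>x. f x * a) = ((\<integral>x. \<bar>f x\<bar> powr q \<partial>M) * \<bar>a\<bar> powr q) powr (1 / q)"
    unfolding lp_norm_def by simp
  also have "\<dots> = (\<integral>x. \<bar>f x\<bar> powr q \<partial>M) powr (1 / q) * \<bar>a\<bar>"
    using q by (simp add: powr_mult integral_nonneg_AE powr_powr)
  finally show ?thesis unfolding lp_norm_def by simp
qed

lemma combine:
  fixes D :: "nat \<Rightarrow> 'a \<Rightarrow> real"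
  assumes P: "prob_space M" and sub: "\<forall>i. subalgebra M (F i)"
    and mono: "\<forall>i j. i \<le> j \<longrightarrow> sets (F i) \<subseteq> sets (F j)" and q: "2 \<le> q"
    and hD: "\<forall>i\<in>{1..n}. D i \<in> borel_measurable (F i) \<and> integrable M (\<lambda>x. \<bar>D i x\<bar> powr q)
            \<and> (AE x in M. real_cond_exp M (F (i - 1)) (D i) x = 0) \<and> lp_norm M q (D i) \<le> R i"
    and Qeq: "\<And>x. Q x = (\<Sum>i\<in>{1..n}. D i x)"
  shows "integrable M (\<lambda>x. \<bar>Q x\<bar> powr q)"
    "(lp_norm M q Q)\<^sup>2 \<le> 2 * q * (q - 1) * (\<Sum>i\<in>{1..n}. (R i)\<^sup>2)"
proof -
  have Qe: "Q = (\<lambda>x. \<Sum>i\<in>{1..n}. D i x)" using Qeq by auto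
  have MS: "(\<lambda>x. \<Sum>i\<in>{1..n}. D i x) \<in> borel_measurable (F n) \<and>
    integrable M (\<lambda>x. \<bar>\<Sum>i\<in>{1..n}. D i x\<bar> powr q) \<and>
    (lp_norm M q (\<lambda>x. \<Sum>i\<in>{1..n}. D i x))\<^sup>2 \<le> 2 * q * (q - 1) * (\<Sum>i\<in>{1..n}. (lp_norm M q (D i))\<^sup>2)"
    by (rule mart_sum[OF P sub mono q]) (use hD in blast)
  then show "integrable M (\<lambda>x. \<bar>Q x\<bar> powr q)" unfolding Qe by blast
  have "(\<Sum>i\<in>{1..n}. (lp_norm M q (D i))\<^sup>2) \<le> (\<Sum>i\<in>{1..n}. (R i)\<^sup>2)"
  proof (rule sum_mono)
    fix i assume "i \<in> {1..n}"
    then have "lp_norm M q (D i) \<le> R i" using hD by blast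
    then show "(lp_norm M q (D i))\<^sup>2 \<le> (R i)\<^sup>2" by (intro power_mono) (auto simp: lp_norm_nonneg)
  qed
  then have "2 * q * (q - 1) * (\<Sum>i\<in>{1..n}. (lp_norm M q (D i))\<^sup>2) \<le> 2 * q * (q - 1) * (\<Sum>i\<in>{1..n}. (R i)\<^sup>2)"
    using q by (intro mult_left_mono) auto
  then show "(lp_norm M q Q)\<^sup>2 \<le> 2 * q * (q - 1) * (\<Sum>i\<in>{1..n}. (R i)\<^sup>2)"
    using MS unfolding Qe by linarith
qed

lemma hyp_c_nonneg:
  assumes "hyp M F \<xi> k n r c" "1 \<le> n" "m \<in> {1..k}"
  shows "0 \<le> c m"
proof -
  have "lp_norm M r (\<xi> 1 m) \<le> c m" using assms unfolding hyp_def by auto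
  then show ?thesis using lp_norm_nonneg order_trans by blast
qed

lemma Qd_n0: "Qd \<xi> (Suc k) 0 b = (\<lambda>x. 0)"
  unfolding Qd_def[abs_def] by (simp add: idx_set_Suc_0)

lemma qq_le:
  fixes q X :: real assumes "2 \<le> q" "0 \<le> X"
  shows "2 * q * (q - 1) * X \<le> 2 * q\<^sup>2 * X"
proof -
  have "2 * q * (q - 1) \<le> 2 * q\<^sup>2" using assms by (simp add: algebra_simps power2_eq_square)
  then show ?thesis using assms by (intro mult_right_mono) auto
qed

lemma chaos_bound:
  fixes \<xi> :: "nat \<Rightarrow> nat \<Rightarrow> 'a \<Rightarrow> real"
  assumes P: "prob_space M" and sub: "\<forall>i. subalgebra M (F i)"
    and mono: "\<forall>i j. i \<le> j \<longrightarrow> sets (F i) \<subseteq> sets (F j)"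
  shows "\<forall>q n b c. 2 \<le> q \<longrightarrow> hyp M F \<xi> (Suc k) n (real (Suc k) * q) c \<longrightarrow>
     integrable M (\<lambda>x. \<bar>Qd \<xi> (Suc k) n b x\<bar> powr q) \<and>
     lp_norm M q (Qd \<xi> (Suc k) n b) \<le> gamma_c (Suc k) * q ^ Suc k * sqrt (\<Sum>I\<in>idx_set (Suc k) n. (b I)\<^sup>2) * (\<Prod>m\<in>{1..Suc k}. c m)"
proof (induction k)
  case 0
  show ?case
  proof (intro allI impI)
    fix q :: real and n b c
    assume q: "2 \<le> q" and h: "hyp M F \<xi> (Suc 0) n (real (Suc 0) * q) c"
    show "integrable M (\<lambda>x. \<bar>Qd \<xi> (Suc 0) n b x\<bar> powr q) \<and>
     lp_norm M q (Qd \<xi> (Suc 0) n b) \<le> gamma_c (Suc 0) * q ^ Suc 0 * sqrt (\<Sum>I\<in>idx_set (Suc 0) n. (b I)\<^sup>2) * (\<Prod>m\<in>{1..Suc 0}. c m)"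
    proof (cases "n = 0")
      case True
      then show ?thesis by (simp add: Qd_n0 lp_norm_zero idx_set_Suc_0)
    next
      case False
      then have n1: "1 \<le> n" by simp
      have c0: "0 \<le> c 1" using hyp_c_nonneg[OF h n1, of 1] by simp
      define D where "D = (\<lambda>i x. \<xi> i 1 x * b [i])"
      define R where "R = (\<lambda>i. \<bar>b [i]\<bar> * c 1)"
      have hD: "\<forall>i\<in>{1..n}. D i \<in> borel_measurable (F i) \<and> integrable M (\<lambda>x. \<bar>D i x\<bar> powr q)
            \<and> (AE x in M. real_cond_exp M (F (i - 1)) (D i) x = 0) \<and> lp_norm M q (D i) \<le> R i"
      proof
        fix i assume i: "i \<in> {1..n}"
        have hi: "\<xi> i 1 \<in> borel_measurable (F i)" "AE x in M. real_cond_exp M (F (i - 1)) (\<xi> i 1) x = 0"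
          "integrable M (\<lambda>x. \<bar>\<xi> i 1 x\<bar> powr q)" "lp_norm M q (\<xi> i 1) \<le> c 1"
          using h i unfolding hyp_def by auto
        have xm: "\<xi> i 1 \<in> borel_measurable M" using measurable_from_subalg[of M "F i"] sub hi(1) by blast
        have m: "D i \<in> borel_measurable (F i)" unfolding D_def using hi(1) by simp
        have e: "(\<lambda>x. \<bar>D i x\<bar> powr q) = (\<lambda>x. \<bar>\<xi> i 1 x\<bar> powr q * \<bar>b [i]\<bar> powr q)"
          unfolding D_def by (simp add: abs_mult powr_mult)
        have ip: "integrable M (\<lambda>x. \<bar>D i x\<bar> powr q)" unfolding e using hi(3) by simp
        have int1: "integrable M (\<lambda>x. \<xi> i 1 x * b [i])"
          using int_from_powr[OF P _ xm hi(3)] q by simp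
        have ce: "AE x in M. real_cond_exp M (F (i - 1)) (D i) x = 0"
          unfolding D_def
          by (rule cond_exp_prod_zero[OF P _ _ xm hi(2) int1]) (use sub in auto)
        have "lp_norm M q (D i) = \<bar>b [i]\<bar> * lp_norm M q (\<xi> i 1)"
          unfolding D_def using q by (simp add: lp_norm_cmult)
        also have "\<dots> \<le> R i" unfolding R_def using hi(4) by (simp add: mult_left_mono)
        finally show "D i \<in> borel_measurable (F i) \<and> integrable M (\<lambda>x. \<bar>D i x\<bar> powr q)
            \<and> (AE x in M. real_cond_exp M (F (i - 1)) (D i) x = 0) \<and> lp_norm M q (D i) \<le> R i"
          using m ip ce by blast
      qed
      have Qeq: "Qd \<xi> (Suc 0) n b x = (\<Sum>i\<in>{1..n}. D i x)" for x
        unfolding Qd_Suc D_def by (simp add: Qd_0 mult.commute)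
      note C = combine[OF P sub mono q hD Qeq]
      have S: "(\<Sum>I\<in>idx_set (Suc 0) n. (b I)\<^sup>2) = (\<Sum>i\<in>{1..n}. (b [i])\<^sup>2)"
        by (simp add: sum_idx_Suc idx_set_0)
      have sR: "(\<Sum>i\<in>{1..n}. (R i)\<^sup>2) = (c 1)\<^sup>2 * (\<Sum>i\<in>{1..n}. (b [i])\<^sup>2)"
        unfolding R_def by (simp add: power_mult_distrib sum_distrib_left mult.commute)
      define B where "B = gamma_c (Suc 0) * q ^ Suc 0 * sqrt (\<Sum>I\<in>idx_set (Suc 0) n. (b I)\<^sup>2) * (\<Prod>m\<in>{1..Suc 0}. c m)"
      have B0: "0 \<le> B" unfolding B_def using q c0
        by (intro mult_nonneg_nonneg) (auto simp: sum_nonneg)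
      have SS: "0 \<le> (\<Sum>i\<in>{1..n}. (b [i])\<^sup>2)" by (simp add: sum_nonneg)
      have B2: "B\<^sup>2 = 2 * q\<^sup>2 * (c 1)\<^sup>2 * (\<Sum>i\<in>{1..n}. (b [i])\<^sup>2)"
        unfolding B_def S using SS by (simp add: power_mult_distrib)
      have "(lp_norm M q (Qd \<xi> (Suc 0) n b))\<^sup>2 \<le> 2 * q * (q - 1) * ((c 1)\<^sup>2 * (\<Sum>i\<in>{1..n}. (b [i])\<^sup>2))"
        using C(2) unfolding sR .
      also have "\<dots> \<le> B\<^sup>2" unfolding B2 using qq_le[OF q, of "(c 1)\<^sup>2 * (\<Sum>i\<in>{1..n}. (b [i])\<^sup>2)"] SS
        by (simp add: mult.assoc)
      finally have "lp_norm M q (Qd \<xi> (Suc 0) n b) \<le> B" using B0 by (rule power2_le_imp_le)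
      then show ?thesis using C(1) unfolding B_def by blast
    qed
  qed
next
  case (Suc k)
  show ?case
  proof (intro allI impI)
    fix q :: real and n b c
    assume q: "2 \<le> q" and h: "hyp M F \<xi> (Suc (Suc k)) n (real (Suc (Suc k)) * q) c"
    show "integrable M (\<lambda>x. \<bar>Qd \<xi> (Suc (Suc k)) n b x\<bar> powr q) \<and>
     lp_norm M q (Qd \<xi> (Suc (Suc k)) n b) \<le> gamma_c (Suc (Suc k)) * q ^ Suc (Suc k) * sqrt (\<Sum>I\<in>idx_set (Suc (Suc k)) n. (b I)\<^sup>2) * (\<Prod>m\<in>{1..Suc (Suc k)}. c m)"
    proof (cases "n = 0")
      case True
      then show ?thesis by (simp add: Qd_n0 lp_norm_zero idx_set_Suc_0)
    next
      case False
      then have n1: "1 \<le> n" by simp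
      let ?K = "Suc (Suc k)"
      have cn: "0 \<le> c m" if "m \<in> {1..?K}" for m using hyp_c_nonneg[OF h n1 that] .
      define t where "t = real ?K / real (Suc k)"
      have t1: "t > 1" unfolding t_def by (simp add: field_simps)
      have st: "1 / real ?K + 1 / t = 1" unfolding t_def by (simp add: field_simps)
      have s1: "real ?K > 1" by simp
      define q' where "q' = t * q"
      have "1 * q \<le> t * q" using t1 q by (intro mult_right_mono) auto
      then have "q \<le> t * q" by (simp only: mult_1)
      then have q'2: "2 \<le> q'" unfolding q'_def using q by linarith
      have exq: "real (Suc k) * q' = real ?K * q" unfolding q'_def t_def by (simp add: field_simps)
      define Y where "Y = (\<lambda>i. Qd \<xi> (Suc k) (i - 1) (\<lambda>J. b (J @ [i])))"
      define Sb where "Sb = (\<lambda>i. \<Sum>J\<in>idx_set (Suc k) (i - 1). (b (J @ [i]))\<^sup>2)"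
      define A where "A = gamma_c (Suc k) * q' ^ Suc k"
      define Pi where "Pi = (\<Prod>m\<in>{1..Suc k}. c m)"
      define D where "D = (\<lambda>i x. \<xi> i ?K x * Y i x)"
      define R where "R = (\<lambda>i. c ?K * (A * sqrt (Sb i) * Pi))"
      have hD: "\<forall>i\<in>{1..n}. D i \<in> borel_measurable (F i) \<and> integrable M (\<lambda>x. \<bar>D i x\<bar> powr q)
            \<and> (AE x in M. real_cond_exp M (F (i - 1)) (D i) x = 0) \<and> lp_norm M q (D i) \<le> R i"
      proof
        fix i assume i: "i \<in> {1..n}"
        have hi: "\<xi> i ?K \<in> borel_measurable (F i)" "AE x in M. real_cond_exp M (F (i - 1)) (\<xi> i ?K) x = 0"
          "integrable M (\<lambda>x. \<bar>\<xi> i ?K x\<bar> powr (real ?K * q))" "lp_norm M (real ?K * q) (\<xi> i ?K) \<le> c ?K"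
          using h i unfolding hyp_def by auto
        have hh: "hyp M F \<xi> (Suc k) (i - 1) (real (Suc k) * q') c"
          using h i unfolding hyp_def exq by auto
        note IHi = Suc.IH[rule_format, OF q'2 hh]
        have iY: "integrable M (\<lambda>x. \<bar>Y i x\<bar> powr (t * q))" using IHi unfolding Y_def q'_def by blast
        have lY: "lp_norm M (t * q) (Y i) \<le> A * sqrt (Sb i) * Pi"
          using IHi unfolding Y_def q'_def A_def Sb_def Pi_def by blast
        have xmi: "\<forall>i'\<in>{1..i - 1}. \<forall>m\<in>{1..Suc k}. \<xi> i' m \<in> borel_measurable (F i')"
          using h i unfolding hyp_def by auto
        have YF: "Y i \<in> borel_measurable (F (i - 1))" unfolding Y_def by (rule Qd_meas[OF sub mono xmi])
        have YFi: "Y i \<in> borel_measurable (F i)" using meas_mono[OF sub mono YF, of i] by simp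
        have YM: "Y i \<in> borel_measurable M" using measurable_from_subalg[of M "F i"] sub YFi by blast
        have xM: "\<xi> i ?K \<in> borel_measurable M" using measurable_from_subalg[of M "F i"] sub hi(1) by blast
        note LH = lp_holder[OF s1 t1 st _ xM YM hi(3) iY]
        have ip: "integrable M (\<lambda>x. \<bar>D i x\<bar> powr q)" unfolding D_def using LH(1) q by simp
        have DM: "D i \<in> borel_measurable M" unfolding D_def using xM YM by simp
        have int1: "integrable M (\<lambda>x. \<xi> i ?K x * Y i x)"
          using int_from_powr[OF P _ DM ip] q unfolding D_def by simp
        have ce: "AE x in M. real_cond_exp M (F (i - 1)) (D i) x = 0"
          unfolding D_def
          by (rule cond_exp_prod_zero[OF P _ YF xM hi(2) int1]) (use sub in auto)
        have m: "D i \<in> borel_measurable (F i)" unfolding D_def using hi(1) YFi by simp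
        have "lp_norm M q (D i) \<le> lp_norm M (real ?K * q) (\<xi> i ?K) * lp_norm M (t * q) (Y i)"
          unfolding D_def using LH(2) q by simp
        also have "\<dots> \<le> c ?K * (A * sqrt (Sb i) * Pi)"
          using hi(4) lY by (intro mult_mono) (auto simp: lp_norm_nonneg cn)
        finally have "lp_norm M q (D i) \<le> R i" unfolding R_def .
        then show "D i \<in> borel_measurable (F i) \<and> integrable M (\<lambda>x. \<bar>D i x\<bar> powr q)
            \<and> (AE x in M. real_cond_exp M (F (i - 1)) (D i) x = 0) \<and> lp_norm M q (D i) \<le> R i"
          using m ip ce by blast
      qed
      have Qeq: "Qd \<xi> ?K n b x = (\<Sum>i\<in>{1..n}. D i x)" for x
        unfolding Qd_Suc[of \<xi> "Suc k"] D_def Y_def ..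
      note C = combine[OF P sub mono q hD Qeq]
      define S where "S = (\<Sum>I\<in>idx_set ?K n. (b I)\<^sup>2)"
      have SS: "S = (\<Sum>i\<in>{1..n}. Sb i)" unfolding S_def Sb_def by (rule sum_idx_Suc)
      have Sb0: "0 \<le> Sb i" for i unfolding Sb_def by (simp add: sum_nonneg)
      have S0: "0 \<le> S" unfolding SS using Sb0 by (simp add: sum_nonneg)
      have sR: "(\<Sum>i\<in>{1..n}. (R i)\<^sup>2) = (c ?K)\<^sup>2 * A\<^sup>2 * Pi\<^sup>2 * S"
      proof -
        have "(R i)\<^sup>2 = (c ?K)\<^sup>2 * A\<^sup>2 * Pi\<^sup>2 * Sb i" for i
          unfolding R_def using Sb0[of i] by (simp add: power_mult_distrib)
        then show ?thesis unfolding SS by (simp add: sum_distrib_left)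
      qed
      have A0: "0 \<le> A" unfolding A_def using q'2 by (simp add: gamma_c_nonneg)
      have P0: "0 \<le> Pi" unfolding Pi_def using cn by (intro prod_nonneg) auto
      have cK0: "0 \<le> c ?K" using cn by simp
      define B where "B = gamma_c ?K * q ^ ?K * sqrt S * (\<Prod>m\<in>{1..?K}. c m)"
      have tt: "1 + 1 / real (Suc k) = t" unfolding t_def by (simp add: field_simps)
      have BB: "B = sqrt 2 * q * (c ?K * A * Pi * sqrt S)"
      proof -
        have "B = sqrt 2 * t ^ Suc k * gamma_c (Suc k) * q ^ ?K * sqrt S * (Pi * c ?K)"
          unfolding B_def Pi_def using tt by (simp add: prod.cl_ivl_Suc del: power_Suc)
        also have "\<dots> = sqrt 2 * q * (c ?K * (gamma_c (Suc k) * (t * q) ^ Suc k) * Pi * sqrt S)"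
          by (simp only: power_mult_distrib power_Suc[of q "Suc k"]) (simp add: algebra_simps)
        finally show ?thesis unfolding A_def q'_def .
      qed
      have B0: "0 \<le> B" unfolding BB using q A0 P0 cK0 S0 by simp
      have B2: "B\<^sup>2 = 2 * q\<^sup>2 * ((c ?K)\<^sup>2 * A\<^sup>2 * Pi\<^sup>2 * S)"
        unfolding BB using S0 by (simp add: power_mult_distrib)
      have X0: "0 \<le> (c ?K)\<^sup>2 * A\<^sup>2 * Pi\<^sup>2 * S" using S0 by simp
      have "(lp_norm M q (Qd \<xi> ?K n b))\<^sup>2 \<le> 2 * q * (q - 1) * ((c ?K)\<^sup>2 * A\<^sup>2 * Pi\<^sup>2 * S)"
        using C(2) unfolding sR .
      also have "\<dots> \<le> B\<^sup>2" unfolding B2 by (rule qq_le[OF q X0])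
      finally have "lp_norm M q (Qd \<xi> ?K n b) \<le> B" using B0 by (rule power2_le_imp_le)
      then show ?thesis using C(1) unfolding B_def S_def by blast
    qed
  qed
qed

lemma ratio_le:
  fixes \<xi> :: "nat \<Rightarrow> nat \<Rightarrow> 'a \<Rightarrow> real"
  assumes adm: "admissible M F \<xi> d n b p" and d: "1 \<le> d" and p: "2 \<le> p"
  shows "lp_norm M p (Qd \<xi> d n b) / (\<Prod>m\<in>{1..d}. mu M \<xi> n m (real d * p)) \<le> gamma_c d * p ^ d"
proof -
  have n1: "1 \<le> n" and bs: "(\<Sum>I\<in>idx_set d n. (b I)\<^sup>2) = 1" and md: "mart_diff M F \<xi> d n"
    and ip: "\<forall>i\<in>{1..n}. \<forall>m\<in>{1..d}. integrable M (\<lambda>x. \<bar>\<xi> i m x\<bar> powr (real d * p))"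
    and mp: "\<forall>m\<in>{1..d}. mu M \<xi> n m (real d * p) > 0"
    using adm unfolding admissible_def coef_set_def by auto
  have P: "prob_space M" and sub: "\<forall>i. subalgebra M (F i)"
    and mono: "\<forall>i j. i \<le> j \<longrightarrow> sets (F i) \<subseteq> sets (F j)"
    and xs: "\<forall>i\<in>{1..n}. \<forall>m\<in>{1..d}. \<xi> i m \<in> borel_measurable (F i) \<and>
        (AE x in M. real_cond_exp M (F (i - 1)) (\<xi> i m) x = 0)"
    using md unfolding mart_diff_def by auto
  have le_mu: "lp_norm M (real d * p) (\<xi> i m) \<le> mu M \<xi> n m (real d * p)" if "i \<in> {1..n}" for i m
    unfolding mu_def by (rule cSUP_upper[OF that]) (simp add: bdd_above_finite)
  have h: "hyp M F \<xi> d n (real d * p) (\<lambda>m. mu M \<xi> n m (real d * p))"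
    unfolding hyp_def using xs ip le_mu by blast
  obtain k where k: "d = Suc k" using d by (cases d) auto
  have CB: "lp_norm M p (Qd \<xi> d n b) \<le> gamma_c d * p ^ d * sqrt (\<Sum>I\<in>idx_set d n. (b I)\<^sup>2) * (\<Prod>m\<in>{1..d}. mu M \<xi> n m (real d * p))"
    using chaos_bound[OF P sub mono, where k=k, rule_format, OF p] h unfolding k by blast
  have pp: "0 < (\<Prod>m\<in>{1..d}. mu M \<xi> n m (real d * p))" using mp by (intro prod_pos) auto
  show ?thesis using CB pp bs by (simp add: divide_le_eq)
qed

lemma upper:
  assumes d: "2 \<le> d" and p: "2 \<le> p"
  shows "KM TYPE('a) d p \<le> ereal (gamma_c d * p ^ d)"
  unfolding KM_def
proof (rule SUP_least)
  fix z :: "'a measure \<times> (nat \<Rightarrow> 'a measure) \<times> (nat \<Rightarrow> nat \<Rightarrow> 'a \<Rightarrow> real) \<times> nat \<times> (nat list \<Rightarrow> real)"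
  assume "z \<in> {(M, F, \<xi>, n, b). admissible M F \<xi> d n b p}"
  then obtain M F \<xi> n b where z: "z = (M, F, \<xi>, n, b)" and adm: "admissible M F \<xi> d n b p" by auto
  have "lp_norm M p (Qd \<xi> d n b) / (\<Prod>m\<in>{1..d}. mu M \<xi> n m (real d * p)) \<le> gamma_c d * p ^ d"
    using ratio_le[OF adm _ p] d by simp
  then show "(case z of (M, F, \<xi>, n, b) \<Rightarrow> ereal (lp_norm M p (Qd \<xi> d n b) / (\<Prod>m\<in>{1..d}. mu M \<xi> n m (real d * p))))
      \<le> ereal (gamma_c d * p ^ d)" unfolding z by simp
qed

definition Vset :: "nat \<Rightarrow> (nat \<Rightarrow> real) set" where
  "Vset n = PiE_dflt {1..n} 0 (\<lambda>_. {-1, 1})"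

definition Inv :: "nat \<Rightarrow> (nat \<Rightarrow> real) set set" where
  "Inv k = {A. \<forall>\<omega> \<omega>'. (\<forall>j\<in>{1..k}. \<omega> j = \<omega>' j) \<longrightarrow> (\<omega> \<in> A \<longleftrightarrow> \<omega>' \<in> A)}"

definition Fc :: "nat \<Rightarrow> (nat \<Rightarrow> real) measure" where
  "Fc k = sigma UNIV (Inv k)"

definition Mc :: "nat \<Rightarrow> (nat \<Rightarrow> real) measure" where
  "Mc n = measure_pmf (pmf_of_set (Vset n))"

definition xic :: "nat \<Rightarrow> nat \<Rightarrow> (nat \<Rightarrow> real) \<Rightarrow> real" where
  "xic i m \<omega> = \<omega> i"

lemma Vset_finite: "finite (Vset n)"
  unfolding Vset_def by (rule finite_PiE_dflt) auto

lemma ones_in_Vset: "(\<lambda>j. if j \<in> {1..n} then 1 else 0) \<in> Vset n"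
  unfolding Vset_def PiE_dflt_def by auto

lemma Vset_ne: "Vset n \<noteq> {}" using ones_in_Vset by blast

lemma Vset_card: "card (Vset n) = 2 ^ n"
proof -
  have "card (Vset n) = (\<Prod>x\<in>{1..n}. card {-1, 1::real})"
    unfolding Vset_def by (rule card_PiE_dflt) auto
  also have "\<dots> = (\<Prod>x\<in>{1..n}. (2::nat))" by (simp add: numeral_2_eq_2)
  also have "\<dots> = 2 ^ n" by simp
  finally show ?thesis .
qed

lemma Inv_sigma: "sigma_algebra UNIV (Inv k)"
  unfolding sigma_algebra_iff2
proof (intro conjI allI impI ballI)
  show "Inv k \<subseteq> Pow UNIV" by simp
  show "{} \<in> Inv k" unfolding Inv_def by simp
  fix s assume "s \<in> Inv k" then show "UNIV - s \<in> Inv k" unfolding Inv_def by blast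
next
  fix A :: "nat \<Rightarrow> (nat \<Rightarrow> real) set" assume "range A \<subseteq> Inv k"
  then have "\<forall>i. A i \<in> Inv k" by auto
  then show "(\<Union>i. A i) \<in> Inv k" unfolding Inv_def by blast
qed

lemma sets_Fc: "sets (Fc k) = Inv k"
  unfolding Fc_def by (simp add: sigma_algebra.sigma_sets_eq[OF Inv_sigma])

lemma space_Fc: "space (Fc k) = UNIV"
  unfolding Fc_def by simp

lemma Inv_mono: assumes ij: "i \<le> j" shows "Inv i \<subseteq> Inv j"
proof
  fix A assume A: "A \<in> Inv i"
  show "A \<in> Inv j" unfolding Inv_def
  proof (intro CollectI allI impI)
    fix \<omega> \<omega>' :: "nat \<Rightarrow> real" assume "\<forall>j'\<in>{1..j}. \<omega> j' = \<omega>' j'"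
    then have "\<forall>j'\<in>{1..i}. \<omega> j' = \<omega>' j'" using ij by auto
    then show "\<omega> \<in> A \<longleftrightarrow> \<omega>' \<in> A" using A unfolding Inv_def by blast
  qed
qed

lemma Inv_0: "Inv 0 = {{}, UNIV}"
proof -
  have "A = {} \<or> A = UNIV" if "A \<in> Inv 0" for A
    using that unfolding Inv_def by auto
  then show ?thesis unfolding Inv_def by auto
qed

lemma prob_Mc: "prob_space (Mc n)"
  unfolding Mc_def by (rule prob_space_measure_pmf)

lemma sub_Fc: "subalgebra (Mc n) (Fc k)"
  unfolding subalgebra_def Mc_def by (simp add: space_Fc)

lemma xic_meas: "1 \<le> i \<Longrightarrow> xic i m \<in> borel_measurable (Fc i)"
proof (rule measurableI)
  fix A :: "real set" assume "1 \<le> i"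
  then have "xic i m -` A \<inter> UNIV \<in> Inv i" unfolding Inv_def xic_def by auto
  then show "xic i m -` A \<inter> space (Fc i) \<in> sets (Fc i)" by (simp add: sets_Fc space_Fc)
qed simp

lemma set_pmf_Mc: "set_pmf (pmf_of_set (Vset n)) = Vset n"
  using Vset_finite Vset_ne by simp

lemma int_Mc: fixes f :: "(nat \<Rightarrow> real) \<Rightarrow> real" shows "integrable (Mc n) f"
  unfolding Mc_def by (rule integrable_measure_pmf_finite) (simp add: set_pmf_Mc Vset_finite)

lemma integral_Mc: fixes f :: "(nat \<Rightarrow> real) \<Rightarrow> real" shows "(\<integral>x. f x \<partial>Mc n) = (\<Sum>a\<in>Vset n. f a) / card (Vset n)"
proof -
  have "(\<integral>x. f x \<partial>Mc n) = (\<Sum>a\<in>Vset n. f a * pmf (pmf_of_set (Vset n)) a)"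
    unfolding Mc_def by (rule integral_measure_pmf_real) (auto simp: Vset_finite set_pmf_Mc)
  also have "\<dots> = (\<Sum>a\<in>Vset n. f a / card (Vset n))"
    using Vset_finite Vset_ne by (intro sum.cong) auto
  finally show ?thesis by (simp add: sum_divide_distrib)
qed

lemma flip_sum_zero:
  assumes A: "A \<in> Inv (i - 1)" and i: "i \<in> {1..n}"
  shows "(\<Sum>\<omega>\<in>Vset n. indicator A \<omega> * \<omega> i) = (0::real)"
proof -
  define fl :: "(nat \<Rightarrow> real) \<Rightarrow> nat \<Rightarrow> real" where "fl = (\<lambda>\<omega>. fun_upd \<omega> i (- \<omega> i))"
  have flV: "fl \<omega> \<in> Vset n" if "\<omega> \<in> Vset n" for \<omega>
    using that i unfolding fl_def Vset_def PiE_dflt_def by auto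
  have flfl: "fl (fl \<omega>) = \<omega>" for \<omega> unfolding fl_def by auto
  have bij: "bij_betw fl (Vset n) (Vset n)"
    by (rule bij_betw_byWitness[where f' = fl]) (auto simp: flfl flV)
  have ind: "indicator A (fl \<omega>) = (indicator A \<omega> :: real)" for \<omega>
  proof -
    have "\<forall>j\<in>{1..i - 1}. fl \<omega> j = \<omega> j" unfolding fl_def by auto
    then have "fl \<omega> \<in> A \<longleftrightarrow> \<omega> \<in> A" using A unfolding Inv_def by blast
    then show ?thesis by (simp add: indicator_def)
  qed
  have "(\<Sum>\<omega>\<in>Vset n. indicator A \<omega> * \<omega> i) = (\<Sum>\<omega>\<in>Vset n. indicator A (fl \<omega>) * fl \<omega> i)"
    by (rule sum.reindex_bij_betw[OF bij, symmetric])
  also have "\<dots> = - (\<Sum>\<omega>\<in>Vset n. indicator A \<omega> * \<omega> i)"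
  proof -
    have "indicator A (fl \<omega>) * fl \<omega> i = - (indicator A \<omega> * \<omega> i)" for \<omega>
      unfolding ind by (simp add: fl_def)
    then show ?thesis by (simp add: sum_negf)
  qed
  finally show ?thesis by simp
qed

lemma xic_ce:
  assumes i: "i \<in> {1..n}"
  shows "AE x in Mc n. real_cond_exp (Mc n) (Fc (i - 1)) (xic i m) x = 0"
proof -
  interpret sigma_finite_subalgebra "Mc n" "Fc (i - 1)" using sigma_fin[OF prob_Mc sub_Fc] .
  have "AE x in Mc n. real_cond_exp (Mc n) (Fc (i - 1)) (xic i m) x = (\<lambda>_. 0) x"
  proof (rule real_cond_exp_charact)
    fix A assume "A \<in> sets (Fc (i - 1))"
    then have A: "A \<in> Inv (i - 1)" by (simp add: sets_Fc)
    have "(\<integral>x\<in>A. xic i m x \<partial>Mc n) = (\<Sum>\<omega>\<in>Vset n. indicator A \<omega> * \<omega> i) / card (Vset n)"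
      unfolding set_lebesgue_integral_def by (simp add: integral_Mc xic_def)
    also have "\<dots> = 0" using flip_sum_zero[OF A i] by simp
    finally show "(\<integral>x\<in>A. xic i m x \<partial>Mc n) = (\<integral>x\<in>A. 0 \<partial>Mc n)" by simp
  qed (auto simp: int_Mc)
  then show ?thesis by simp
qed

lemma lp_xic:
  assumes i: "i \<in> {1..n}" and r: "r > 0"
  shows "lp_norm (Mc n) r (xic i m) = 1"
proof -
  have "(\<integral>x. \<bar>xic i m x\<bar> powr r \<partial>Mc n) = (\<Sum>a\<in>Vset n. \<bar>a i\<bar> powr r) / card (Vset n)"
    by (simp add: integral_Mc xic_def)
  also have "(\<Sum>a\<in>Vset n. \<bar>a i\<bar> powr r) = (\<Sum>a\<in>Vset n. 1)"
  proof (rule sum.cong[OF refl])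
    fix a assume "a \<in> Vset n"
    then have "a i \<in> {-1, 1}" using i unfolding Vset_def PiE_dflt_def by auto
    then show "\<bar>a i\<bar> powr r = 1" by auto
  qed
  also have "(\<Sum>a\<in>Vset n. (1::real)) / card (Vset n) = 1" using Vset_finite Vset_ne by simp
  finally show ?thesis unfolding lp_norm_def by simp
qed

lemma mu_xic:
  assumes n: "1 \<le> n" and r: "r > 0"
  shows "mu (Mc n) xic n m r = 1"
proof -
  have "mu (Mc n) xic n m r = (SUP i\<in>{1..n}. (1::real))"
    unfolding mu_def using lp_xic r by (intro SUP_cong) auto
  also have "\<dots> = 1" using n by (intro cSUP_const) auto
  finally show ?thesis .
qed

lemma card_idx: "card (idx_set d n) = n choose d"
proof -
  have eq: "idx_set d n = sorted_list_of_set ` {S. S \<subseteq> {1..n} \<and> card S = d}"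
  proof (intro equalityI subsetI)
    fix I assume I: "I \<in> idx_set d n"
    have sw: "sorted_wrt (<) I" and len: "length I = d" and st: "set I \<subseteq> {1..n}"
      using I unfolding idx_set_def by auto
    have "distinct I" using sw by (simp add: strict_sorted_iff)
    then have "card (set I) = d" using len by (simp add: distinct_card)
    moreover have "I = sorted_list_of_set (set I)"
      by (rule strict_sorted_equal[symmetric]) (auto simp: sw)
    ultimately show "I \<in> sorted_list_of_set ` {S. S \<subseteq> {1..n} \<and> card S = d}" using st by blast
  next
    fix I assume "I \<in> sorted_list_of_set ` {S. S \<subseteq> {1..n} \<and> card S = d}"
    then obtain S where S: "S \<subseteq> {1..n}" "card S = d" and I: "I = sorted_list_of_set S" by auto
    have fS: "finite S" using S(1) finite_subset by blast
    show "I \<in> idx_set d n" unfolding idx_set_def I using S fS by auto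
  qed
  have inj: "inj_on sorted_list_of_set {S. S \<subseteq> {1..n} \<and> card S = (d::nat)}"
  proof (rule inj_onI)
    fix x y assume x: "x \<in> {S. S \<subseteq> {1..n} \<and> card S = d}" and y: "y \<in> {S. S \<subseteq> {1..n} \<and> card S = d}"
      and e: "sorted_list_of_set x = sorted_list_of_set y"
    have "finite x" "finite y" using x y finite_subset by auto
    then have "set (sorted_list_of_set x) = x" "set (sorted_list_of_set y) = y" by auto
    then show "x = y" using e by metis
  qed
  have "card (idx_set d n) = card {S. S \<subseteq> {1..n} \<and> card S = d}"
    unfolding eq by (rule card_image[OF inj])
  also have "\<dots> = n choose d" using n_subsets[of "{1..n}" d] by simp
  finally show ?thesis .
qed

lemma ones_Q:
  assumes Kp: "0 < card (idx_set d n)"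
  shows "Qd xic d n (\<lambda>I. 1 / sqrt (card (idx_set d n))) (\<lambda>j. if j \<in> {1..n} then 1 else 0) = sqrt (card (idx_set d n))"
proof -
  let ?w = "(\<lambda>j::nat. if j \<in> {1..n} then 1 else (0::real))"
  have "xi_prod xic d I ?w = 1" if I: "I \<in> idx_set d n" for I
  proof -
    have "xic (I ! (m - 1)) m ?w = 1" if m: "m \<in> {1..d}" for m
    proof -
      have "m - 1 < length I" using I m unfolding idx_set_def by auto
      then have "I ! (m - 1) \<in> set I" by simp
      then have "I ! (m - 1) \<in> {1..n}" using I unfolding idx_set_def by auto
      then show ?thesis unfolding xic_def by simp
    qed
    then show ?thesis unfolding xi_prod_def by simp
  qed
  then have "Qd xic d n (\<lambda>I. 1 / sqrt (card (idx_set d n))) ?w = (\<Sum>I\<in>idx_set d n. 1 / sqrt (card (idx_set d n)))"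
    unfolding Qd_def by simp
  also have "\<dots> = card (idx_set d n) / sqrt (card (idx_set d n))" by simp
  also have "\<dots> = sqrt (card (idx_set d n))" using Kp by (simp add: real_div_sqrt)
  finally show ?thesis .
qed

lemma lower_ratio:
  assumes d: "1 \<le> d" and N: "1 \<le> N" and p: "p > 0"
  shows "admissible (Mc (d * N)) Fc xic d (d * N) (\<lambda>I. 1 / sqrt (card (idx_set d (d * N)))) p \<and>
    sqrt (card (idx_set d (d * N))) / 2 powr (real (d * N) / p) \<le>
    lp_norm (Mc (d * N)) p (Qd xic d (d * N) (\<lambda>I. 1 / sqrt (card (idx_set d (d * N)))))
      / (\<Prod>m\<in>{1..d}. mu (Mc (d * N)) xic (d * N) m (real d * p))"
proof -
  define n where "n = d * N"
  define K where "K = card (idx_set d n)"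
  define b where "b = (\<lambda>I::nat list. 1 / sqrt K)"
  have dn: "d \<le> n" unfolding n_def using N by simp
  have n1: "1 \<le> n" using d dn by simp
  have Kp: "0 < K" unfolding K_def card_idx using dn by simp
  have dp: "real d * p > 0" using d p by simp
  have bs: "(\<Sum>I\<in>idx_set d n. (b I)\<^sup>2) = 1"
    unfolding b_def using Kp by (simp add: K_def power_divide)
  have md: "mart_diff (Mc n) Fc xic d n"
    unfolding mart_diff_def
  proof (intro conjI allI impI ballI)
    show "prob_space (Mc n)" by (rule prob_Mc)
    show "subalgebra (Mc n) (Fc i)" for i by (rule sub_Fc)
    show "sets (Fc i) \<subseteq> sets (Fc j)" if "i \<le> j" for i j using Inv_mono[OF that] by (simp add: sets_Fc)
    show "sets (Fc 0) = {{}, space (Mc n)}" by (simp add: sets_Fc Inv_0 Mc_def)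
    fix i m assume i: "i \<in> {1..n}" and m: "m \<in> {1..d}"
    show "xic i m \<in> borel_measurable (Fc i)" using i by (intro xic_meas) auto
    show "integrable (Mc n) (xic i m)" by (rule int_Mc)
    show "AE x in Mc n. real_cond_exp (Mc n) (Fc (i - 1)) (xic i m) x = 0" using xic_ce[OF i] .
  qed
  have mu1: "mu (Mc n) xic n m (real d * p) = 1" for m using mu_xic[OF n1 dp] .
  have adm: "admissible (Mc n) Fc xic d n b p"
    unfolding admissible_def coef_set_def using n1 bs md mu1 by (auto simp: int_Mc)
  let ?w = "(\<lambda>j::nat. if j \<in> {1..n} then 1 else (0::real))"
  have Qw: "Qd xic d n b ?w = sqrt K" unfolding b_def K_def using ones_Q[of d n] Kp K_def by simp
  have "\<bar>Qd xic d n b ?w\<bar> powr p / card (Vset n) \<le> (\<Sum>a\<in>Vset n. \<bar>Qd xic d n b a\<bar> powr p) / card (Vset n)"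
    using ones_in_Vset[of n] by (intro divide_right_mono member_le_sum) (auto simp: Vset_finite)
  also have "\<dots> = (\<integral>x. \<bar>Qd xic d n b x\<bar> powr p \<partial>Mc n)" by (simp add: integral_Mc)
  finally have I1: "sqrt K powr p / 2 ^ n \<le> (\<integral>x. \<bar>Qd xic d n b x\<bar> powr p \<partial>Mc n)"
    unfolding Qw Vset_card by simp
  have "sqrt K / 2 powr (real n / p) = (sqrt K powr p / 2 ^ n) powr (1 / p)"
  proof -
    have "(sqrt K powr p / 2 ^ n) powr (1 / p) = (sqrt K powr p) powr (1 / p) / (2 ^ n) powr (1 / p)"
      by (simp add: powr_divide)
    also have "(sqrt K powr p) powr (1 / p) = sqrt K" using p by (simp add: powr_powr)
    also have "((2::real) ^ n) powr (1 / p) = 2 powr (real n / p)"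
      by (simp add: powr_realpow[symmetric] powr_powr)
    finally show ?thesis by simp
  qed
  also have "\<dots> \<le> lp_norm (Mc n) p (Qd xic d n b)"
    unfolding lp_norm_def using I1 p by (intro powr_mono2) auto
  finally have "sqrt K / 2 powr (real n / p) \<le> lp_norm (Mc n) p (Qd xic d n b) / (\<Prod>m\<in>{1..d}. mu (Mc n) xic n m (real d * p))"
    by (simp add: mu1)
  then show ?thesis using adm unfolding n_def K_def b_def by simp
qed

lemma lower:
  assumes d: "2 \<le> d" and p: "2 \<le> p"
  shows "ereal ((1 / 4) ^ d * p powr (real d / 2)) \<le> KM TYPE(nat \<Rightarrow> real) d p"
proof -
  define N where "N = nat \<lfloor>p\<rfloor>"
  have fl0: "0 \<le> \<lfloor>p\<rfloor>" using p by simp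
  have rN: "real N = real_of_int \<lfloor>p\<rfloor>" unfolding N_def using fl0 by simp
  have Nle: "real N \<le> p" unfolding rN by simp
  have Nge: "p - 1 < real N" unfolding rN by linarith
  have N1: "1 \<le> N" using Nge p by linarith
  have Nh: "p / 2 \<le> real N" using Nge p by linarith
  have d1: "1 \<le> d" using d by simp
  have p0: "p > 0" using p by simp
  define n where "n = d * N"
  define K where "K = card (idx_set d n)"
  define b where "b = (\<lambda>I::nat list. 1 / sqrt K)"
  note LR = lower_ratio[OF d1 N1 p0, folded n_def, folded K_def, folded b_def]
  have elem: "(Mc n, Fc, xic, n, b) \<in> {(M :: (nat \<Rightarrow> real) measure, F, \<xi>, n, b). admissible M F \<xi> d n b p}"
    using LR by simp
  have KM_ge: "ereal (lp_norm (Mc n) p (Qd xic d n b) / (\<Prod>m\<in>{1..d}. mu (Mc n) xic n m (real d * p)))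
      \<le> KM TYPE(nat \<Rightarrow> real) d p"
    unfolding KM_def by (rule SUP_upper2[OF elem]) simp
  have Kge: "real N ^ d \<le> real K"
  proof -
    have "(real n / real d) ^ d \<le> real (n choose d)"
      using binomial_ge_n_over_k_pow_k[of d n] N1 unfolding n_def by simp
    moreover have "real n / real d = real N" unfolding n_def using d1 by simp
    ultimately show ?thesis unfolding K_def card_idx by simp
  qed
  have Npos: "0 < real N" using N1 by simp
  have sK: "real N powr (real d / 2) \<le> sqrt K"
  proof -
    have "real N powr (real d / 2) = (real N powr real d) powr (1 / 2)" by (simp add: powr_powr)
    also have "\<dots> = sqrt (real N ^ d)" using Npos by (simp add: powr_realpow powr_half_sqrt)
    also have "\<dots> \<le> sqrt K" using Kge by simp
    finally show ?thesis .
  qed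
  have h1: "(p / 2) powr (real d / 2) \<le> sqrt K"
    using sK Nh p by (meson order_trans powr_mono2 divide_nonneg_nonneg of_nat_0_le_iff zero_le_numeral
        order.trans[OF zero_le_numeral] less_imp_le p0)
  have h2: "(p / 2) powr (real d / 2) = p powr (real d / 2) / 2 powr (real d / 2)"
    by (simp add: powr_divide)
  have h3: "2 powr (real d / 2) \<le> 2 powr real d" by (intro powr_mono) auto
  have h4: "2 powr (real n / p) \<le> 2 powr real d"
  proof (intro powr_mono)
    have "real n / p = real d * (real N / p)" unfolding n_def by simp
    also have "\<dots> \<le> real d * 1" using Nle p0 by (intro mult_left_mono) auto
    finally show "real n / p \<le> real d" by simp
  qed auto
  have h5: "(2::real) powr real d * 2 powr real d = 4 ^ d"
    by (simp add: powr_realpow power_mult_distrib[symmetric])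
  have pp: "0 \<le> p powr (real d / 2)" by simp
  have "(1 / 4) ^ d * p powr (real d / 2) = p powr (real d / 2) / (2 powr real d * 2 powr real d)"
    unfolding h5 by (simp add: power_one_over)
  also have "\<dots> \<le> p powr (real d / 2) / (2 powr (real d / 2) * 2 powr (real n / p))"
    using h3 h4 pp by (intro divide_left_mono mult_mono) auto
  also have "\<dots> = (p / 2) powr (real d / 2) / 2 powr (real n / p)" unfolding h2 by simp
  also have "\<dots> \<le> sqrt K / 2 powr (real n / p)" using h1 by (intro divide_right_mono) auto
  also have "\<dots> \<le> lp_norm (Mc n) p (Qd xic d n b) / (\<Prod>m\<in>{1..d}. mu (Mc n) xic n m (real d * p))"
    using LR by simp
  finally show ?thesis using KM_ge order_trans by (metis ereal_less_eq(3))
qed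

theorem corollary3:
  "\<exists>C::real. 0 < C \<and>
     (\<forall>d p. 2 \<le> d \<longrightarrow> 2 \<le> p \<longrightarrow>
        ereal (C ^ d * p powr (real d / 2)) \<le> KM TYPE(nat \<Rightarrow> real) d p \<and>
        KM TYPE('a) d p \<le> ereal (gamma_c d * p ^ d))"
proof (intro exI[of _ "1 / 4 :: real"] conjI allI impI)
  fix d :: nat and p :: real assume "2 \<le> d" "2 \<le> p"
  then show "ereal ((1 / 4) ^ d * p powr (real d / 2)) \<le> KM TYPE(nat \<Rightarrow> real) d p" by (rule lower)
  show "KM TYPE('a) d p \<le> ereal (gamma_c d * p ^ d)" using upper \<open>2 \<le> d\<close> \<open>2 \<le> p\<close> by blast
qed simp

end
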